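(* Let $P:\mathscr P\to\mathscr T$, $Q:\mathscr Q\to\mathscr T$ and $A:\mathscr T\to\mathscr U$ be morphisms of $\mathscr J$-theories. (1) If $P$ commutes with $Q$, then $A\circ P$ commutes with $A\circ Q$. (2) If $A$ is a subtheory embedding (i.e. its hom-components are monomorphisms in $\mathscr V$) and $A\circ P$ commutes with $A\circ Q$, then $P$ commutes with $Q$.
   Context: $(\mathscr V,\otimes,I)$ is a closed symmetric monoidal category, $\underline{\mathscr V}$ the associated $\mathscr V$-category; everything is $\mathscr V$-enriched. A system of arities is a full sub-$\mathscr V$-category $\mathscr J\hookrightarrow\underline{\mathscr V}$ containing $I$ and closed under $\otimes$. A cotensor $[V,C]$ is an object with counit $V\to\mathscr C([V,C],C)$ inducing $\mathscr C(-,[V,C])\cong\underline{\mathscr V}(V,\mathscr C(-,C))$. A $\mathscr J$-theory is a $\mathscr V$-category $\mathscr T$ with $\mathrm{ob}\,\mathscr T=\mathrm{ob}\,\mathscr J$ and an identity-on-objects $\tau:\mathscr J^{\mathrm{op}}\to\mathscr T$ preserving cotensors by objects of $\mathscr J$; a morphism $(\mathscr T,\tau)\to(\mathscr U,\upsilon)$ is a $\mathscr V$-functor $A$ with $A\tau=\upsilon$. In a theory $(\mathscr T,\tau)$, $J\otimes K$ and $K\otimes J$ are cotensors of $K$ by $J$ with counits $J\xrightarrow{\mathrm{Coev}}\underline{\mathscr V}(K,J\otimes K)=\mathscr J^{\mathrm{op}}(J\otimes K,K)\xrightarrow{\tau}\mathscr T(J\otimes K,K)$ and $J\xrightarrow{\mathrm{Coev}'}\underline{\mathscr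 V}(K,K\otimes J)\xrightarrow{\tau}\mathscr T(K\otimes J,K)$ ($\mathrm{Coev}'$ = coevaluation composed with symmetry), inducing $\mathscr V$-functors $[J,-]_\ell$ ($K\mapsto J\otimes K$) and $[J,-]_r$ ($K\mapsto K\otimes J$). Kronecker products $\mathsf k,\tilde{\mathsf k}:\mathscr T(J,J')\otimes\mathscr T(K,K')\to\mathscr T(J\otimes K,J'\otimes K')$ are composition after $[K,-]_r\otimes[J',-]_\ell$ (into $\mathscr T(J\otimes K,J'\otimes K)\otimes\mathscr T(J'\otimes K,J'\otimes K')$), resp. after $[K',-]_r\otimes[J,-]_\ell$ (into $\mathscr T(J\otimes K',J'\otimes K')\otimes\mathscr T(J\otimes K,J\otimes K')$). Morphisms of theories $P:\mathscr P\to\mathscr T$, $Q:\mathscr Q\to\mathscr T$ commute if $\mathsf k\cdot(P_{JJ'}\otimes Q_{KK'})=\tilde{\mathsf k}\cdot(P_{JJ'}\otimes Q_{KK'})$ in $\mathscr T$ for all $J,J',K,K'\in\mathscr J$. *)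

theory Defs
  imports Main
begin

section \<open>Closed symmetric monoidal categories (the base \<V>)\<close>

record ('o,'m) vbase =
  Ob  :: "'o set"
  Ar  :: "'m set"
  Dom :: "'m \<Rightarrow> 'o"
  Cod :: "'m \<Rightarrow> 'o"
  Cmp :: "'m \<Rightarrow> 'm \<Rightarrow> 'm"          (* Cmp g f = g \<circ> f *)
  Idt :: "'o \<Rightarrow> 'm"
  Tob :: "'o \<Rightarrow> 'o \<Rightarrow> 'o"
  Tar :: "'m \<Rightarrow> 'm \<Rightarrow> 'm"
  Unt :: "'o"
  Asc :: "'o \<Rightarrow> 'o \<Rightarrow> 'o \<Rightarrow> 'm"    (* (X\<otimes>Y)\<otimes>Z \<rightarrow> X\<otimes>(Y\<otimes>Z) *)
  Lu  :: "'o \<Rightarrow> 'm"                 (* I\<otimes>X \<rightarrow> X *)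
  Ru  :: "'o \<Rightarrow> 'm"                 (* X\<otimes>I \<rightarrow> X *)
  Sy  :: "'o \<Rightarrow> 'o \<Rightarrow> 'm"           (* X\<otimes>Y \<rightarrow> Y\<otimes>X *)
  Ih  :: "'o \<Rightarrow> 'o \<Rightarrow> 'o"           (* internal hom [Y,Z] *)
  Ev  :: "'o \<Rightarrow> 'o \<Rightarrow> 'm"           (* [Y,Z]\<otimes>Y \<rightarrow> Z *)

definition hom :: "('o,'m,'x) vbase_scheme \<Rightarrow> 'm \<Rightarrow> 'o \<Rightarrow> 'o \<Rightarrow> bool" where
  "hom V f X Y \<longleftrightarrow> f \<in> Ar V \<and> Dom V f = X \<and> Cod V f = Y"

definition iso_in :: "('o,'m,'x) vbase_scheme \<Rightarrow> 'm \<Rightarrow> bool" where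
  "iso_in V f \<longleftrightarrow> f \<in> Ar V \<and> (\<exists>g. hom V g (Cod V f) (Dom V f) \<and>
      Cmp V g f = Idt V (Dom V f) \<and> Cmp V f g = Idt V (Cod V f))"

definition mono_in :: "('o,'m,'x) vbase_scheme \<Rightarrow> 'm \<Rightarrow> bool" where
  "mono_in V m \<longleftrightarrow> m \<in> Ar V \<and> (\<forall>f g. f \<in> Ar V \<and> g \<in> Ar V \<and> Dom V f = Dom V g \<and>
      Cod V f = Dom V m \<and> Cod V g = Dom V m \<and> Cmp V m f = Cmp V m g \<longrightarrow> f = g)"

definition smcc :: "('o,'m,'x) vbase_scheme \<Rightarrow> bool" where
  "smcc V \<longleftrightarrow>
    \<comment> \<open>category\<close>
    (\<forall>f\<in>Ar V. Dom V f \<in> Ob V \<and> Cod V f \<in> Ob V) \<and>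
    (\<forall>X\<in>Ob V. hom V (Idt V X) X X) \<and>
    (\<forall>f g. f \<in> Ar V \<and> g \<in> Ar V \<and> Cod V f = Dom V g \<longrightarrow> hom V (Cmp V g f) (Dom V f) (Cod V g)) \<and>
    (\<forall>f\<in>Ar V. Cmp V f (Idt V (Dom V f)) = f \<and> Cmp V (Idt V (Cod V f)) f = f) \<and>
    (\<forall>f g h. f \<in> Ar V \<and> g \<in> Ar V \<and> h \<in> Ar V \<and> Cod V f = Dom V g \<and> Cod V g = Dom V h \<longrightarrow>
        Cmp V h (Cmp V g f) = Cmp V (Cmp V h g) f) \<and>
    \<comment> \<open>tensor bifunctor\<close>
    Unt V \<in> Ob V \<and>
    (\<forall>X\<in>Ob V. \<forall>Y\<in>Ob V. Tob V X Y \<in> Ob V) \<and>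
    (\<forall>f\<in>Ar V. \<forall>g\<in>Ar V. hom V (Tar V f g) (Tob V (Dom V f) (Dom V g)) (Tob V (Cod V f) (Cod V g))) \<and>
    (\<forall>X\<in>Ob V. \<forall>Y\<in>Ob V. Tar V (Idt V X) (Idt V Y) = Idt V (Tob V X Y)) \<and>
    (\<forall>f g f' g'. f \<in> Ar V \<and> g \<in> Ar V \<and> f' \<in> Ar V \<and> g' \<in> Ar V \<and>
        Cod V f = Dom V g \<and> Cod V f' = Dom V g' \<longrightarrow>
        Tar V (Cmp V g f) (Cmp V g' f') = Cmp V (Tar V g g') (Tar V f f')) \<and>
    \<comment> \<open>associator, unitors, symmetry: natural isomorphisms\<close>
    (\<forall>X\<in>Ob V. \<forall>Y\<in>Ob V. \<forall>Z\<in>Ob V.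
        hom V (Asc V X Y Z) (Tob V (Tob V X Y) Z) (Tob V X (Tob V Y Z)) \<and> iso_in V (Asc V X Y Z)) \<and>
    (\<forall>f\<in>Ar V. \<forall>g\<in>Ar V. \<forall>h\<in>Ar V.
        Cmp V (Asc V (Cod V f) (Cod V g) (Cod V h)) (Tar V (Tar V f g) h) =
        Cmp V (Tar V f (Tar V g h)) (Asc V (Dom V f) (Dom V g) (Dom V h))) \<and>
    (\<forall>X\<in>Ob V. hom V (Lu V X) (Tob V (Unt V) X) X \<and> iso_in V (Lu V X)) \<and>
    (\<forall>f\<in>Ar V. Cmp V (Lu V (Cod V f)) (Tar V (Idt V (Unt V)) f) = Cmp V f (Lu V (Dom V f))) \<and>
    (\<forall>X\<in>Ob V. hom V (Ru V X) (Tob V X (Unt V)) X \<and> iso_in V (Ru V X)) \<and>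
    (\<forall>f\<in>Ar V. Cmp V (Ru V (Cod V f)) (Tar V f (Idt V (Unt V))) = Cmp V f (Ru V (Dom V f))) \<and>
    (\<forall>X\<in>Ob V. \<forall>Y\<in>Ob V. hom V (Sy V X Y) (Tob V X Y) (Tob V Y X) \<and>
        Cmp V (Sy V Y X) (Sy V X Y) = Idt V (Tob V X Y)) \<and>
    (\<forall>f\<in>Ar V. \<forall>g\<in>Ar V.
        Cmp V (Sy V (Cod V f) (Cod V g)) (Tar V f g) = Cmp V (Tar V g f) (Sy V (Dom V f) (Dom V g))) \<and>
    \<comment> \<open>coherence: pentagon, triangle, hexagon\<close>
    (\<forall>W\<in>Ob V. \<forall>X\<in>Ob V. \<forall>Y\<in>Ob V. \<forall>Z\<in>Ob V.
        Cmp V (Asc V W X (Tob V Y Z)) (Asc V (Tob V W X) Y Z) =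
        Cmp V (Tar V (Idt V W) (Asc V X Y Z))
              (Cmp V (Asc V W (Tob V X Y) Z) (Tar V (Asc V W X Y) (Idt V Z)))) \<and>
    (\<forall>X\<in>Ob V. \<forall>Y\<in>Ob V.
        Cmp V (Tar V (Idt V X) (Lu V Y)) (Asc V X (Unt V) Y) = Tar V (Ru V X) (Idt V Y)) \<and>
    (\<forall>A\<in>Ob V. \<forall>B\<in>Ob V. \<forall>C\<in>Ob V.
        Cmp V (Asc V B C A) (Cmp V (Sy V A (Tob V B C)) (Asc V A B C)) =
        Cmp V (Tar V (Idt V B) (Sy V A C)) (Cmp V (Asc V B A C) (Tar V (Sy V A B) (Idt V C)))) \<and>
    \<comment> \<open>closed structure\<close>
    (\<forall>Y\<in>Ob V. \<forall>Z\<in>Ob V. Ih V Y Z \<in> Ob V \<and> hom V (Ev V Y Z) (Tob V (Ih V Y Z) Y) Z) \<and>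
    (\<forall>X\<in>Ob V. \<forall>Y\<in>Ob V. \<forall>Z\<in>Ob V. \<forall>f. hom V f (Tob V X Y) Z \<longrightarrow>
        (\<exists>!h. hom V h X (Ih V Y Z) \<and> Cmp V (Ev V Y Z) (Tar V h (Idt V Y)) = f))"

definition cur :: "('o,'m,'x) vbase_scheme \<Rightarrow> 'o \<Rightarrow> 'o \<Rightarrow> 'o \<Rightarrow> 'm \<Rightarrow> 'm" where
  "cur V X Y Z f = (THE h. hom V h X (Ih V Y Z) \<and> Cmp V (Ev V Y Z) (Tar V h (Idt V Y)) = f)"

section \<open>\<V>-categories (with objects among the objects of \<V>)\<close>

record ('o,'m) vcat =
  VOb   :: "'o set"
  VHom  :: "'o \<Rightarrow> 'o \<Rightarrow> 'o"
  VComp :: "'o \<Rightarrow> 'o \<Rightarrow> 'o \<Rightarrow> 'm"   (* VComp a b c : C(b,c) \<otimes> C(a,b) \<rightarrow> C(a,c) *)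
  VId   :: "'o \<Rightarrow> 'm"

definition is_vcat :: "('o,'m,'x) vbase_scheme \<Rightarrow> ('o,'m) vcat \<Rightarrow> bool" where
  "is_vcat V C \<longleftrightarrow>
    (\<forall>a\<in>VOb C. \<forall>b\<in>VOb C. VHom C a b \<in> Ob V) \<and>
    (\<forall>a\<in>VOb C. \<forall>b\<in>VOb C. \<forall>c\<in>VOb C.
        hom V (VComp C a b c) (Tob V (VHom C b c) (VHom C a b)) (VHom C a c)) \<and>
    (\<forall>a\<in>VOb C. hom V (VId C a) (Unt V) (VHom C a a)) \<and>
    (\<forall>a\<in>VOb C. \<forall>b\<in>VOb C. \<forall>c\<in>VOb C. \<forall>d\<in>VOb C.
        Cmp V (VComp C a b d) (Tar V (VComp C b c d) (Idt V (VHom C a b))) =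
        Cmp V (VComp C a c d) (Cmp V (Tar V (Idt V (VHom C c d)) (VComp C a b c))
                                     (Asc V (VHom C c d) (VHom C b c) (VHom C a b)))) \<and>
    (\<forall>a\<in>VOb C. \<forall>b\<in>VOb C.
        Cmp V (VComp C a b b) (Tar V (VId C b) (Idt V (VHom C a b))) = Lu V (VHom C a b) \<and>
        Cmp V (VComp C a a b) (Tar V (Idt V (VHom C a b)) (VId C a)) = Ru V (VHom C a b))"

text \<open>Identity-on-objects \<V>-functors between \<V>-categories with the same objects.\<close>
definition vfun :: "('o,'m,'x) vbase_scheme \<Rightarrow> ('o,'m) vcat \<Rightarrow> ('o,'m) vcat \<Rightarrow> ('o \<Rightarrow> 'o \<Rightarrow> 'm) \<Rightarrow> bool" where
  "vfun V C D F \<longleftrightarrow> VOb C = VOb D \<and>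
    (\<forall>a\<in>VOb C. \<forall>b\<in>VOb C. hom V (F a b) (VHom C a b) (VHom D a b)) \<and>
    (\<forall>a\<in>VOb C. \<forall>b\<in>VOb C. \<forall>c\<in>VOb C.
        Cmp V (F a c) (VComp C a b c) = Cmp V (VComp D a b c) (Tar V (F b c) (F a b))) \<and>
    (\<forall>a\<in>VOb C. Cmp V (F a a) (VId C a) = VId D a)"

text \<open>The full sub-\<V>-category \<J> of \<underline>\<V> on the object set Jo, and its opposite.\<close>
definition uV_comp :: "('o,'m,'x) vbase_scheme \<Rightarrow> 'o \<Rightarrow> 'o \<Rightarrow> 'o \<Rightarrow> 'm" where
  "uV_comp V a b c = cur V (Tob V (Ih V b c) (Ih V a b)) a c
     (Cmp V (Ev V b c) (Cmp V (Tar V (Idt V (Ih V b c)) (Ev V a b)) (Asc V (Ih V b c) (Ih V a b) a)))"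

definition uV_id :: "('o,'m,'x) vbase_scheme \<Rightarrow> 'o \<Rightarrow> 'm" where
  "uV_id V a = cur V (Unt V) a a (Lu V a)"

definition jop :: "('o,'m,'x) vbase_scheme \<Rightarrow> 'o set \<Rightarrow> ('o,'m) vcat" where
  "jop V Jo = \<lparr> VOb = Jo, VHom = (\<lambda>a b. Ih V b a),
     VComp = (\<lambda>a b c. Cmp V (uV_comp V c b a) (Sy V (Ih V c b) (Ih V b a))),
     VId = uV_id V \<rparr>"

definition arity_system :: "('o,'m,'x) vbase_scheme \<Rightarrow> 'o set \<Rightarrow> bool" where
  "arity_system V Jo \<longleftrightarrow> Jo \<subseteq> Ob V \<and> Unt V \<in> Jo \<and> (\<forall>a\<in>Jo. \<forall>b\<in>Jo. Tob V a b \<in> Jo)"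

text \<open>The comparison map C(X,c) \<rightarrow> [v, C(X,c0)] induced by a counit e : v \<rightarrow> C(c,c0).\<close>
definition cmpar :: "('o,'m,'x) vbase_scheme \<Rightarrow> ('o,'m) vcat \<Rightarrow> 'o \<Rightarrow> 'o \<Rightarrow> 'o \<Rightarrow> 'm \<Rightarrow> 'o \<Rightarrow> 'm" where
  "cmpar V C v c0 c e X = cur V (VHom C X c) v (VHom C X c0)
     (Cmp V (VComp C X c c0) (Cmp V (Sy V (VHom C X c) (VHom C c c0)) (Tar V (Idt V (VHom C X c)) e)))"

text \<open>(c, e) is a cotensor [v, c0] in C.\<close>
definition is_cotensor :: "('o,'m,'x) vbase_scheme \<Rightarrow> ('o,'m) vcat \<Rightarrow> 'o \<Rightarrow> 'o \<Rightarrow> 'o \<Rightarrow> 'm \<Rightarrow> bool" where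
  "is_cotensor V C v c0 c e \<longleftrightarrow> v \<in> Ob V \<and> c0 \<in> VOb C \<and> c \<in> VOb C \<and> hom V e v (VHom C c c0) \<and>
     (\<forall>X\<in>VOb C. iso_in V (cmpar V C v c0 c e X))"

section \<open>\<J>-theories and their morphisms\<close>

definition Jtheory :: "('o,'m,'x) vbase_scheme \<Rightarrow> 'o set \<Rightarrow> ('o,'m) vcat \<Rightarrow> ('o \<Rightarrow> 'o \<Rightarrow> 'm) \<Rightarrow> bool" where
  "Jtheory V Jo T \<tau> \<longleftrightarrow> is_vcat V T \<and> VOb T = Jo \<and> vfun V (jop V Jo) T \<tau> \<and>
     (\<forall>j\<in>Jo. \<forall>k\<in>Jo. \<forall>c\<in>Jo. \<forall>e. is_cotensor V (jop V Jo) j k c e \<longrightarrow>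
         is_cotensor V T j k c (Cmp V (\<tau> c k) e))"

definition theory_mor :: "('o,'m,'x) vbase_scheme \<Rightarrow> 'o set \<Rightarrow> ('o,'m) vcat \<Rightarrow> ('o \<Rightarrow> 'o \<Rightarrow> 'm)
     \<Rightarrow> ('o,'m) vcat \<Rightarrow> ('o \<Rightarrow> 'o \<Rightarrow> 'm) \<Rightarrow> ('o \<Rightarrow> 'o \<Rightarrow> 'm) \<Rightarrow> bool" where
  "theory_mor V Jo T \<tau> U \<upsilon> A \<longleftrightarrow> vfun V T U A \<and> (\<forall>a\<in>Jo. \<forall>b\<in>Jo. Cmp V (A a b) (\<tau> a b) = \<upsilon> a b)"

definition coev :: "('o,'m,'x) vbase_scheme \<Rightarrow> 'o \<Rightarrow> 'o \<Rightarrow> 'm" where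
  "coev V j k = cur V j k (Tob V j k) (Idt V (Tob V j k))"

definition coev' :: "('o,'m,'x) vbase_scheme \<Rightarrow> 'o \<Rightarrow> 'o \<Rightarrow> 'm" where
  "coev' V j k = cur V j k (Tob V k j) (Sy V j k)"

text \<open>Counits exhibiting J\<otimes>K resp. K\<otimes>J as cotensors of K by J in a theory.\<close>
definition eL :: "('o,'m,'x) vbase_scheme \<Rightarrow> ('o \<Rightarrow> 'o \<Rightarrow> 'm) \<Rightarrow> 'o \<Rightarrow> 'o \<Rightarrow> 'm" where
  "eL V \<tau> j k = Cmp V (\<tau> (Tob V j k) k) (coev V j k)"

definition eR :: "('o,'m,'x) vbase_scheme \<Rightarrow> ('o \<Rightarrow> 'o \<Rightarrow> 'm) \<Rightarrow> 'o \<Rightarrow> 'o \<Rightarrow> 'm" where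
  "eR V \<tau> j k = Cmp V (\<tau> (Tob V k j) k) (coev' V j k)"

text \<open>Hom-component T(K,K') \<rightarrow> T(c,c') of the \<V>-functor induced by cotensors (c,e)=[v,K], (c',e')=[v,K'].\<close>
definition indmap :: "('o,'m,'x) vbase_scheme \<Rightarrow> ('o,'m) vcat \<Rightarrow> 'o \<Rightarrow> 'o \<Rightarrow> 'o
     \<Rightarrow> 'o \<Rightarrow> 'm \<Rightarrow> 'o \<Rightarrow> 'm \<Rightarrow> 'm" where
  "indmap V T v K K' c e c' e' = (THE g. hom V g (VHom T K K') (VHom T c c') \<and>
     Cmp V (cmpar V T v K' c' e' c) g =
     cur V (VHom T K K') v (VHom T c K') (Cmp V (VComp T c K K') (Tar V (Idt V (VHom T K K')) e)))"

text \<open>[J,-]_l on homs: T(K,K') \<rightarrow> T(J\<otimes>K, J\<otimes>K');  [J,-]_r: T(K,K') \<rightarrow> T(K\<otimes>J, K'\<otimes>J).\<close>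
definition lfun :: "('o,'m,'x) vbase_scheme \<Rightarrow> ('o,'m) vcat \<Rightarrow> ('o \<Rightarrow> 'o \<Rightarrow> 'm) \<Rightarrow> 'o \<Rightarrow> 'o \<Rightarrow> 'o \<Rightarrow> 'm" where
  "lfun V T \<tau> j k k' = indmap V T j k k' (Tob V j k) (eL V \<tau> j k) (Tob V j k') (eL V \<tau> j k')"

definition rfun :: "('o,'m,'x) vbase_scheme \<Rightarrow> ('o,'m) vcat \<Rightarrow> ('o \<Rightarrow> 'o \<Rightarrow> 'm) \<Rightarrow> 'o \<Rightarrow> 'o \<Rightarrow> 'o \<Rightarrow> 'm" where
  "rfun V T \<tau> j k k' = indmap V T j k k' (Tob V k j) (eR V \<tau> j k) (Tob V k' j) (eR V \<tau> j k')"

text \<open>Kronecker products k, k~ : T(J,J') \<otimes> T(K,K') \<rightarrow> T(J\<otimes>K, J'\<otimes>K').\<close>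
definition kron :: "('o,'m,'x) vbase_scheme \<Rightarrow> ('o,'m) vcat \<Rightarrow> ('o \<Rightarrow> 'o \<Rightarrow> 'm) \<Rightarrow> 'o \<Rightarrow> 'o \<Rightarrow> 'o \<Rightarrow> 'o \<Rightarrow> 'm" where
  "kron V T \<tau> j j' k k' =
     Cmp V (VComp T (Tob V j k) (Tob V j' k) (Tob V j' k'))
       (Cmp V (Sy V (VHom T (Tob V j k) (Tob V j' k)) (VHom T (Tob V j' k) (Tob V j' k')))
              (Tar V (rfun V T \<tau> k j j') (lfun V T \<tau> j' k k')))"

definition kron' :: "('o,'m,'x) vbase_scheme \<Rightarrow> ('o,'m) vcat \<Rightarrow> ('o \<Rightarrow> 'o \<Rightarrow> 'm) \<Rightarrow> 'o \<Rightarrow> 'o \<Rightarrow> 'o \<Rightarrow> 'o \<Rightarrow> 'm" where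
  "kron' V T \<tau> j j' k k' =
     Cmp V (VComp T (Tob V j k) (Tob V j k') (Tob V j' k'))
       (Tar V (rfun V T \<tau> k' j j') (lfun V T \<tau> j k k'))"

definition commutes :: "('o,'m,'x) vbase_scheme \<Rightarrow> 'o set \<Rightarrow> ('o,'m) vcat \<Rightarrow> ('o \<Rightarrow> 'o \<Rightarrow> 'm)
     \<Rightarrow> ('o \<Rightarrow> 'o \<Rightarrow> 'm) \<Rightarrow> ('o \<Rightarrow> 'o \<Rightarrow> 'm) \<Rightarrow> bool" where
  "commutes V Jo T \<tau> F G \<longleftrightarrow> (\<forall>j\<in>Jo. \<forall>j'\<in>Jo. \<forall>k\<in>Jo. \<forall>k'\<in>Jo.
     Cmp V (kron V T \<tau> j j' k k') (Tar V (F j j') (G k k')) =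
     Cmp V (kron' V T \<tau> j j' k k') (Tar V (F j j') (G k k')))"

end

theory Submission
  imports Defs
begin


locale smc = fixes V :: "('o,'m) vbase" assumes smcc: "smcc V"
begin

abbreviation cmpv (infixr "\<cdot>" 55) where "g \<cdot> f \<equiv> Cmp V g f"
abbreviation tarv (infixr "\<odot>" 60) where "f \<odot> g \<equiv> Tar V f g"
abbreviation Id1 ("\<one>") where "\<one> X \<equiv> Idt V X"

lemmas S0 = smcc[unfolded smcc_def, THEN conjunct1]
lemmas S1 = smcc[unfolded smcc_def, THEN conjunct2, THEN conjunct1]
lemmas S2 = smcc[unfolded smcc_def, THEN conjunct2, THEN conjunct2, THEN conjunct1]
lemmas S3 = smcc[unfolded smcc_def, THEN conjunct2, THEN conjunct2, THEN conjunct2, THEN conjunct1]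
lemmas S4 = smcc[unfolded smcc_def, THEN conjunct2, THEN conjunct2, THEN conjunct2, THEN conjunct2, THEN conjunct1]
lemmas S5 = smcc[unfolded smcc_def, THEN conjunct2, THEN conjunct2, THEN conjunct2, THEN conjunct2, THEN conjunct2, THEN conjunct1]
lemmas S6 = smcc[unfolded smcc_def, THEN conjunct2, THEN conjunct2, THEN conjunct2, THEN conjunct2, THEN conjunct2, THEN conjunct2, THEN conjunct1]
lemmas S7 = smcc[unfolded smcc_def, THEN conjunct2, THEN conjunct2, THEN conjunct2, THEN conjunct2, THEN conjunct2, THEN conjunct2, THEN conjunct2, THEN conjunct1]
lemmas S8 = smcc[unfolded smcc_def, THEN conjunct2, THEN conjunct2, THEN conjunct2, THEN conjunct2, THEN conjunct2, THEN conjunct2, THEN conjunct2, THEN conjunct2, THEN conjunct1]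
lemmas S9 = smcc[unfolded smcc_def, THEN conjunct2, THEN conjunct2, THEN conjunct2, THEN conjunct2, THEN conjunct2, THEN conjunct2, THEN conjunct2, THEN conjunct2, THEN conjunct2, THEN conjunct1]
lemmas S10 = smcc[unfolded smcc_def, THEN conjunct2, THEN conjunct2, THEN conjunct2, THEN conjunct2, THEN conjunct2, THEN conjunct2, THEN conjunct2, THEN conjunct2, THEN conjunct2, THEN conjunct2, THEN conjunct1]
lemmas S11 = smcc[unfolded smcc_def, THEN conjunct2, THEN conjunct2, THEN conjunct2, THEN conjunct2, THEN conjunct2, THEN conjunct2, THEN conjunct2, THEN conjunct2, THEN conjunct2, THEN conjunct2, THEN conjunct2, THEN conjunct1]
lemmas S12 = smcc[unfolded smcc_def, THEN conjunct2, THEN conjunct2, THEN conjunct2, THEN conjunct2, THEN conjunct2, THEN conjunct2, THEN conjunct2, THEN conjunct2, THEN conjunct2, THEN conjunct2, THEN conjunct2, THEN conjunct2, THEN conjunct1]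
lemmas S13 = smcc[unfolded smcc_def, THEN conjunct2, THEN conjunct2, THEN conjunct2, THEN conjunct2, THEN conjunct2, THEN conjunct2, THEN conjunct2, THEN conjunct2, THEN conjunct2, THEN conjunct2, THEN conjunct2, THEN conjunct2, THEN conjunct2, THEN conjunct1]
lemmas S14 = smcc[unfolded smcc_def, THEN conjunct2, THEN conjunct2, THEN conjunct2, THEN conjunct2, THEN conjunct2, THEN conjunct2, THEN conjunct2, THEN conjunct2, THEN conjunct2, THEN conjunct2, THEN conjunct2, THEN conjunct2, THEN conjunct2, THEN conjunct2, THEN conjunct1]
lemmas S15 = smcc[unfolded smcc_def, THEN conjunct2, THEN conjunct2, THEN conjunct2, THEN conjunct2, THEN conjunct2, THEN conjunct2, THEN conjunct2, THEN conjunct2, THEN conjunct2, THEN conjunct2, THEN conjunct2, THEN conjunct2, THEN conjunct2, THEN conjunct2, THEN conjunct2, THEN conjunct1]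
lemmas S16 = smcc[unfolded smcc_def, THEN conjunct2, THEN conjunct2, THEN conjunct2, THEN conjunct2, THEN conjunct2, THEN conjunct2, THEN conjunct2, THEN conjunct2, THEN conjunct2, THEN conjunct2, THEN conjunct2, THEN conjunct2, THEN conjunct2, THEN conjunct2, THEN conjunct2, THEN conjunct2, THEN conjunct1]
lemmas S17 = smcc[unfolded smcc_def, THEN conjunct2, THEN conjunct2, THEN conjunct2, THEN conjunct2, THEN conjunct2, THEN conjunct2, THEN conjunct2, THEN conjunct2, THEN conjunct2, THEN conjunct2, THEN conjunct2, THEN conjunct2, THEN conjunct2, THEN conjunct2, THEN conjunct2, THEN conjunct2, THEN conjunct2, THEN conjunct1]
lemmas S18 = smcc[unfolded smcc_def, THEN conjunct2, THEN conjunct2, THEN conjunct2, THEN conjunct2, THEN conjunct2, THEN conjunct2, THEN conjunct2, THEN conjunct2, THEN conjunct2, THEN conjunct2, THEN conjunct2, THEN conjunct2, THEN conjunct2, THEN conjunct2, THEN conjunct2, THEN conjunct2, THEN conjunct2, THEN conjunct2, THEN conjunct1]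
lemmas S19 = smcc[unfolded smcc_def, THEN conjunct2, THEN conjunct2, THEN conjunct2, THEN conjunct2, THEN conjunct2, THEN conjunct2, THEN conjunct2, THEN conjunct2, THEN conjunct2, THEN conjunct2, THEN conjunct2, THEN conjunct2, THEN conjunct2, THEN conjunct2, THEN conjunct2, THEN conjunct2, THEN conjunct2, THEN conjunct2, THEN conjunct2, THEN conjunct1]
lemmas S20 = smcc[unfolded smcc_def, THEN conjunct2, THEN conjunct2, THEN conjunct2, THEN conjunct2, THEN conjunct2, THEN conjunct2, THEN conjunct2, THEN conjunct2, THEN conjunct2, THEN conjunct2, THEN conjunct2, THEN conjunct2, THEN conjunct2, THEN conjunct2, THEN conjunct2, THEN conjunct2, THEN conjunct2, THEN conjunct2, THEN conjunct2, THEN conjunct2, THEN conjunct1]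
lemmas S21 = smcc[unfolded smcc_def, THEN conjunct2, THEN conjunct2, THEN conjunct2, THEN conjunct2, THEN conjunct2, THEN conjunct2, THEN conjunct2, THEN conjunct2, THEN conjunct2, THEN conjunct2, THEN conjunct2, THEN conjunct2, THEN conjunct2, THEN conjunct2, THEN conjunct2, THEN conjunct2, THEN conjunct2, THEN conjunct2, THEN conjunct2, THEN conjunct2, THEN conjunct2, THEN conjunct1]
lemmas S22 = smcc[unfolded smcc_def, THEN conjunct2, THEN conjunct2, THEN conjunct2, THEN conjunct2, THEN conjunct2, THEN conjunct2, THEN conjunct2, THEN conjunct2, THEN conjunct2, THEN conjunct2, THEN conjunct2, THEN conjunct2, THEN conjunct2, THEN conjunct2, THEN conjunct2, THEN conjunct2, THEN conjunct2, THEN conjunct2, THEN conjunct2, THEN conjunct2, THEN conjunct2, THEN conjunct2]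

lemma dc_ob: "f \<in> Ar V \<Longrightarrow> Dom V f \<in> Ob V" "f \<in> Ar V \<Longrightarrow> Cod V f \<in> Ob V"
  using S0 by blast+

lemma id_ar[simp]: "X \<in> Ob V \<Longrightarrow> \<one> X \<in> Ar V" and id_dom[simp]: "X \<in> Ob V \<Longrightarrow> Dom V (\<one> X) = X"
  and id_cod[simp]: "X \<in> Ob V \<Longrightarrow> Cod V (\<one> X) = X"
  using S1 unfolding hom_def by blast+

lemma comp_ar[simp]: "f \<in> Ar V \<Longrightarrow> g \<in> Ar V \<Longrightarrow> Cod V f = Dom V g \<Longrightarrow> g \<cdot> f \<in> Ar V"
  and comp_dom[simp]: "f \<in> Ar V \<Longrightarrow> g \<in> Ar V \<Longrightarrow> Cod V f = Dom V g \<Longrightarrow> Dom V (g \<cdot> f) = Dom V f"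
  and comp_cod[simp]: "f \<in> Ar V \<Longrightarrow> g \<in> Ar V \<Longrightarrow> Cod V f = Dom V g \<Longrightarrow> Cod V (g \<cdot> f) = Cod V g"
  using S2 unfolding hom_def by blast+

lemma id_r[simp]: "f \<in> Ar V \<Longrightarrow> X = Dom V f \<Longrightarrow> f \<cdot> \<one> X = f"
  and id_l[simp]: "f \<in> Ar V \<Longrightarrow> X = Cod V f \<Longrightarrow> \<one> X \<cdot> f = f"
  using S3 by blast+

lemma assoc[simp]: "f \<in> Ar V \<Longrightarrow> g \<in> Ar V \<Longrightarrow> h \<in> Ar V \<Longrightarrow> Cod V f = Dom V g \<Longrightarrow> Cod V g = Dom V h
   \<Longrightarrow> (h \<cdot> g) \<cdot> f = h \<cdot> (g \<cdot> f)"
  using S4 by metis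

lemma unt_ob[simp]: "Unt V \<in> Ob V" using S5 by blast
lemma tob_ob[simp]: "X \<in> Ob V \<Longrightarrow> Y \<in> Ob V \<Longrightarrow> Tob V X Y \<in> Ob V" using S6 by blast

lemma tar_ar[simp]: "f \<in> Ar V \<Longrightarrow> g \<in> Ar V \<Longrightarrow> f \<odot> g \<in> Ar V"
  and tar_dom[simp]: "f \<in> Ar V \<Longrightarrow> g \<in> Ar V \<Longrightarrow> Dom V (f \<odot> g) = Tob V (Dom V f) (Dom V g)"
  and tar_cod[simp]: "f \<in> Ar V \<Longrightarrow> g \<in> Ar V \<Longrightarrow> Cod V (f \<odot> g) = Tob V (Cod V f) (Cod V g)"
  using S7 unfolding hom_def by blast+

lemma tar_id[simp]: "X \<in> Ob V \<Longrightarrow> Y \<in> Ob V \<Longrightarrow> \<one> X \<odot> \<one> Y = \<one> (Tob V X Y)"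
  using S8 by blast

lemma interchange: "f \<in> Ar V \<Longrightarrow> g \<in> Ar V \<Longrightarrow> f' \<in> Ar V \<Longrightarrow> g' \<in> Ar V \<Longrightarrow>
   Cod V f = Dom V g \<Longrightarrow> Cod V f' = Dom V g' \<Longrightarrow> (g \<odot> g') \<cdot> (f \<odot> f') = (g \<cdot> f) \<odot> (g' \<cdot> f')"
  using S9 by metis

lemma asc_hom: "X \<in> Ob V \<Longrightarrow> Y \<in> Ob V \<Longrightarrow> Z \<in> Ob V \<Longrightarrow> hom V (Asc V X Y Z) (Tob V (Tob V X Y) Z) (Tob V X (Tob V Y Z)) \<and> iso_in V (Asc V X Y Z)"
  using S10 by blast

lemma asc_ar[simp]: "X \<in> Ob V \<Longrightarrow> Y \<in> Ob V \<Longrightarrow> Z \<in> Ob V \<Longrightarrow> Asc V X Y Z \<in> Ar V"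
  and asc_dom[simp]: "X \<in> Ob V \<Longrightarrow> Y \<in> Ob V \<Longrightarrow> Z \<in> Ob V \<Longrightarrow> Dom V (Asc V X Y Z) = Tob V (Tob V X Y) Z"
  and asc_cod[simp]: "X \<in> Ob V \<Longrightarrow> Y \<in> Ob V \<Longrightarrow> Z \<in> Ob V \<Longrightarrow> Cod V (Asc V X Y Z) = Tob V X (Tob V Y Z)"
  using asc_hom unfolding hom_def by blast+

lemma asc_nat: "f \<in> Ar V \<Longrightarrow> g \<in> Ar V \<Longrightarrow> h \<in> Ar V \<Longrightarrow>
   Asc V (Cod V f) (Cod V g) (Cod V h) \<cdot> ((f \<odot> g) \<odot> h) = (f \<odot> (g \<odot> h)) \<cdot> Asc V (Dom V f) (Dom V g) (Dom V h)"
  using S11 by blast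

lemma sy_ar[simp]: "X \<in> Ob V \<Longrightarrow> Y \<in> Ob V \<Longrightarrow> Sy V X Y \<in> Ar V"
  and sy_dom[simp]: "X \<in> Ob V \<Longrightarrow> Y \<in> Ob V \<Longrightarrow> Dom V (Sy V X Y) = Tob V X Y"
  and sy_cod[simp]: "X \<in> Ob V \<Longrightarrow> Y \<in> Ob V \<Longrightarrow> Cod V (Sy V X Y) = Tob V Y X"
  and sy_inv: "X \<in> Ob V \<Longrightarrow> Y \<in> Ob V \<Longrightarrow> Sy V Y X \<cdot> Sy V X Y = \<one> (Tob V X Y)"
  using S16 unfolding hom_def by blast+

lemma sy_nat: "f \<in> Ar V \<Longrightarrow> g \<in> Ar V \<Longrightarrow>
   Sy V (Cod V f) (Cod V g) \<cdot> (f \<odot> g) = (g \<odot> f) \<cdot> Sy V (Dom V f) (Dom V g)"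
  using S17 by blast

lemma ih_ob[simp]: "Y \<in> Ob V \<Longrightarrow> Z \<in> Ob V \<Longrightarrow> Ih V Y Z \<in> Ob V"
  using S21 by blast

lemma ev_ar[simp]: "Y \<in> Ob V \<Longrightarrow> Z \<in> Ob V \<Longrightarrow> Ev V Y Z \<in> Ar V"
  and ev_dom[simp]: "Y \<in> Ob V \<Longrightarrow> Z \<in> Ob V \<Longrightarrow> Dom V (Ev V Y Z) = Tob V (Ih V Y Z) Y"
  and ev_cod[simp]: "Y \<in> Ob V \<Longrightarrow> Z \<in> Ob V \<Longrightarrow> Cod V (Ev V Y Z) = Z"
  using S21 unfolding hom_def by blast+

lemma cur_ex: "X \<in> Ob V \<Longrightarrow> Y \<in> Ob V \<Longrightarrow> Z \<in> Ob V \<Longrightarrow> hom V f (Tob V X Y) Z \<Longrightarrow>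
        (\<exists>!h. hom V h X (Ih V Y Z) \<and> Ev V Y Z \<cdot> (h \<odot> \<one> Y) = f)"
  using S22 by blast

lemma dom_ob[simp]: "f \<in> Ar V \<Longrightarrow> Dom V f \<in> Ob V" and cod_ob[simp]: "f \<in> Ar V \<Longrightarrow> Cod V f \<in> Ob V"
  using dc_ob by auto

lemma cur_prop: assumes "f \<in> Ar V" "Dom V f = Tob V X Y" "Cod V f = Z" "X \<in> Ob V" "Y \<in> Ob V" "Z \<in> Ob V"
  shows "hom V (cur V X Y Z f) X (Ih V Y Z) \<and> Ev V Y Z \<cdot> (cur V X Y Z f \<odot> \<one> Y) = f"
proof -
  have "\<exists>!h. hom V h X (Ih V Y Z) \<and> Ev V Y Z \<cdot> (h \<odot> \<one> Y) = f"
    using cur_ex assms unfolding hom_def by blast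
  then show ?thesis unfolding cur_def by (rule theI')
qed

lemma cur_ar[simp]: "f \<in> Ar V \<Longrightarrow> Dom V f = Tob V X Y \<Longrightarrow> Cod V f = Z \<Longrightarrow> X \<in> Ob V \<Longrightarrow> Y \<in> Ob V \<Longrightarrow> Z \<in> Ob V \<Longrightarrow> cur V X Y Z f \<in> Ar V"
  and cur_dom[simp]: "f \<in> Ar V \<Longrightarrow> Dom V f = Tob V X Y \<Longrightarrow> Cod V f = Z \<Longrightarrow> X \<in> Ob V \<Longrightarrow> Y \<in> Ob V \<Longrightarrow> Z \<in> Ob V \<Longrightarrow> Dom V (cur V X Y Z f) = X"
  and cur_cod[simp]: "f \<in> Ar V \<Longrightarrow> Dom V f = Tob V X Y \<Longrightarrow> Cod V f = Z \<Longrightarrow> X \<in> Ob V \<Longrightarrow> Y \<in> Ob V \<Longrightarrow> Z \<in> Ob V \<Longrightarrow> Cod V (cur V X Y Z f) = Ih V Y Z"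
  and cur_eq: "f \<in> Ar V \<Longrightarrow> Dom V f = Tob V X Y \<Longrightarrow> Cod V f = Z \<Longrightarrow> X \<in> Ob V \<Longrightarrow> Y \<in> Ob V \<Longrightarrow> Z \<in> Ob V \<Longrightarrow> Ev V Y Z \<cdot> (cur V X Y Z f \<odot> \<one> Y) = f"
  using cur_prop unfolding hom_def by blast+

lemma cur_uniq: assumes "h \<in> Ar V" "Dom V h = X" "Cod V h = Ih V Y Z" "Y \<in> Ob V" "Z \<in> Ob V"
    "Ev V Y Z \<cdot> (h \<odot> \<one> Y) = f"
  shows "h = cur V X Y Z f"
proof -
  have X: "X \<in> Ob V" using assms by auto
  have f: "f \<in> Ar V" "Dom V f = Tob V X Y" "Cod V f = Z" using assms X by auto
  have "\<exists>!h. hom V h X (Ih V Y Z) \<and> Ev V Y Z \<cdot> (h \<odot> \<one> Y) = f"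
    using cur_ex X assms f unfolding hom_def by blast
  moreover have "hom V (cur V X Y Z f) X (Ih V Y Z) \<and> Ev V Y Z \<cdot> (cur V X Y Z f \<odot> \<one> Y) = f"
    using cur_prop f X assms by blast
  ultimately show ?thesis using assms unfolding hom_def by blast
qed

lemma ev_inj: assumes "h \<in> Ar V" "h' \<in> Ar V" "Dom V h = Dom V h'" "Cod V h = Ih V Y Z" "Cod V h' = Ih V Y Z"
   "Y \<in> Ob V" "Z \<in> Ob V" "Ev V Y Z \<cdot> (h \<odot> \<one> Y) = Ev V Y Z \<cdot> (h' \<odot> \<one> Y)"
  shows "h = h'"
  using cur_uniq[OF assms(1) refl assms(4,6,7) refl] cur_uniq[OF assms(2) refl assms(5,6,7) refl] assms(3,8)
  by simp

lemma cur_nat: assumes "f \<in> Ar V" "Dom V f = Tob V X Y" "Cod V f = Z" "Y \<in> Ob V" "Z \<in> Ob V"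
   "h \<in> Ar V" "Cod V h = X"
  shows "cur V X Y Z f \<cdot> h = cur V (Dom V h) Y Z (f \<cdot> (h \<odot> \<one> Y))"
proof (rule cur_uniq)
  have X: "X \<in> Ob V" using assms by auto
  show "cur V X Y Z f \<cdot> h \<in> Ar V" "Dom V (cur V X Y Z f \<cdot> h) = Dom V h" "Cod V (cur V X Y Z f \<cdot> h) = Ih V Y Z"
    using assms X by auto
  have "Ev V Y Z \<cdot> ((cur V X Y Z f \<cdot> h) \<odot> \<one> Y) = Ev V Y Z \<cdot> ((cur V X Y Z f \<odot> \<one> Y) \<cdot> (h \<odot> \<one> Y))"
    using assms X by (simp add: interchange)
  also have "\<dots> = f \<cdot> (h \<odot> \<one> Y)"
    using assms X by (simp del: assoc add: assoc[symmetric] cur_eq)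
  finally show "Ev V Y Z \<cdot> ((cur V X Y Z f \<cdot> h) \<odot> \<one> Y) = f \<cdot> (h \<odot> \<one> Y)" .
qed (use assms in auto)

lemma cur_post: assumes "f \<in> Ar V" "Dom V f = Tob V X Y" "Cod V f = Z" "X \<in> Ob V" "Y \<in> Ob V"
   "g \<in> Ar V" "Dom V g = Z"
  shows "cur V X Y (Cod V g) (g \<cdot> f) = cur V (Ih V Y Z) Y (Cod V g) (g \<cdot> Ev V Y Z) \<cdot> cur V X Y Z f"
proof -
  have Z: "Z \<in> Ob V" using assms by auto
  have "Ev V Y (Cod V g) \<cdot> ((cur V (Ih V Y Z) Y (Cod V g) (g \<cdot> Ev V Y Z) \<cdot> cur V X Y Z f) \<odot> \<one> Y)
     = Ev V Y (Cod V g) \<cdot> ((cur V (Ih V Y Z) Y (Cod V g) (g \<cdot> Ev V Y Z) \<odot> \<one> Y) \<cdot> (cur V X Y Z f \<odot> \<one> Y))"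
    using assms Z by (simp add: interchange)
  also have "\<dots> = (Ev V Y (Cod V g) \<cdot> (cur V (Ih V Y Z) Y (Cod V g) (g \<cdot> Ev V Y Z) \<odot> \<one> Y)) \<cdot> (cur V X Y Z f \<odot> \<one> Y)"
    using assms Z by simp
  also have "\<dots> = g \<cdot> (Ev V Y Z \<cdot> (cur V X Y Z f \<odot> \<one> Y))"
    using assms Z by (simp add: cur_eq)
  also have "\<dots> = g \<cdot> f" using assms Z by (simp add: cur_eq)
  finally have e: "Ev V Y (Cod V g) \<cdot> ((cur V (Ih V Y Z) Y (Cod V g) (g \<cdot> Ev V Y Z) \<cdot> cur V X Y Z f) \<odot> \<one> Y) = g \<cdot> f" .
  show ?thesis
    by (rule cur_uniq[symmetric, OF _ _ _ _ _ e]) (use assms Z in auto)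
qed

lemma iso_mono: assumes "iso_in V f" "a \<in> Ar V" "b \<in> Ar V" "Cod V a = Dom V f" "Cod V b = Dom V f"
   "Dom V a = Dom V b" "f \<cdot> a = f \<cdot> b" shows "a = b"
proof -
  obtain g where g: "hom V g (Cod V f) (Dom V f)" "g \<cdot> f = \<one> (Dom V f)" "f \<in> Ar V"
    using assms(1) unfolding iso_in_def by blast
  have g': "g \<in> Ar V" "Dom V g = Cod V f" "Cod V g = Dom V f" using g unfolding hom_def by auto
  have "a = (g \<cdot> f) \<cdot> a" using assms g g' by (simp only: id_l)
  also have "\<dots> = g \<cdot> (f \<cdot> a)" using assms g g' by (intro assoc) auto
  also have "\<dots> = g \<cdot> (f \<cdot> b)" using assms by simp
  also have "\<dots> = (g \<cdot> f) \<cdot> b" using assms g g' by (intro assoc[symmetric]) auto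
  also have "\<dots> = b" using assms g g' by (simp only: id_l)
  finally show ?thesis .
qed

lemma iso_intro: "f \<in> Ar V \<Longrightarrow> g \<in> Ar V \<Longrightarrow> Dom V g = Cod V f \<Longrightarrow> Cod V g = Dom V f \<Longrightarrow>
  g \<cdot> f = \<one> (Dom V f) \<Longrightarrow> f \<cdot> g = \<one> (Cod V f) \<Longrightarrow> iso_in V f"
  unfolding iso_in_def hom_def by blast

definition ai where "ai X Y Z = (SOME g. hom V g (Tob V X (Tob V Y Z)) (Tob V (Tob V X Y) Z) \<and>
   g \<cdot> Asc V X Y Z = \<one> (Tob V (Tob V X Y) Z) \<and> Asc V X Y Z \<cdot> g = \<one> (Tob V X (Tob V Y Z)))"

lemma ai_prop: assumes "X \<in> Ob V" "Y \<in> Ob V" "Z \<in> Ob V"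
  shows "hom V (ai X Y Z) (Tob V X (Tob V Y Z)) (Tob V (Tob V X Y) Z) \<and>
   ai X Y Z \<cdot> Asc V X Y Z = \<one> (Tob V (Tob V X Y) Z) \<and> Asc V X Y Z \<cdot> ai X Y Z = \<one> (Tob V X (Tob V Y Z))"
proof -
  have "iso_in V (Asc V X Y Z)" using asc_hom assms by blast
  then have "\<exists>g. hom V g (Tob V X (Tob V Y Z)) (Tob V (Tob V X Y) Z) \<and>
   g \<cdot> Asc V X Y Z = \<one> (Tob V (Tob V X Y) Z) \<and> Asc V X Y Z \<cdot> g = \<one> (Tob V X (Tob V Y Z))"
    using assms unfolding iso_in_def by simp
  then show ?thesis unfolding ai_def by (rule someI_ex)
qed

lemma ai_ar[simp]: "X \<in> Ob V \<Longrightarrow> Y \<in> Ob V \<Longrightarrow> Z \<in> Ob V \<Longrightarrow> ai X Y Z \<in> Ar V"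
  and ai_dom[simp]: "X \<in> Ob V \<Longrightarrow> Y \<in> Ob V \<Longrightarrow> Z \<in> Ob V \<Longrightarrow> Dom V (ai X Y Z) = Tob V X (Tob V Y Z)"
  and ai_cod[simp]: "X \<in> Ob V \<Longrightarrow> Y \<in> Ob V \<Longrightarrow> Z \<in> Ob V \<Longrightarrow> Cod V (ai X Y Z) = Tob V (Tob V X Y) Z"
  and ai_asc: "X \<in> Ob V \<Longrightarrow> Y \<in> Ob V \<Longrightarrow> Z \<in> Ob V \<Longrightarrow> ai X Y Z \<cdot> Asc V X Y Z = \<one> (Tob V (Tob V X Y) Z)"
  and asc_ai: "X \<in> Ob V \<Longrightarrow> Y \<in> Ob V \<Longrightarrow> Z \<in> Ob V \<Longrightarrow> Asc V X Y Z \<cdot> ai X Y Z = \<one> (Tob V X (Tob V Y Z))"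
  using ai_prop unfolding hom_def by blast+

lemma ai_nat: assumes "f \<in> Ar V" "g \<in> Ar V" "h \<in> Ar V"
  shows "ai (Cod V f) (Cod V g) (Cod V h) \<cdot> (f \<odot> (g \<odot> h)) = ((f \<odot> g) \<odot> h) \<cdot> ai (Dom V f) (Dom V g) (Dom V h)"
proof -
  let ?a = "ai (Cod V f) (Cod V g) (Cod V h)" and ?b = "ai (Dom V f) (Dom V g) (Dom V h)"
  have "?a \<cdot> (f \<odot> (g \<odot> h)) = ?a \<cdot> ((f \<odot> (g \<odot> h)) \<cdot> (Asc V (Dom V f) (Dom V g) (Dom V h) \<cdot> ?b))"
    using assms by (simp add: asc_ai)
  also have "\<dots> = ?a \<cdot> ((Asc V (Cod V f) (Cod V g) (Cod V h) \<cdot> ((f \<odot> g) \<odot> h)) \<cdot> ?b)"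
    using assms by (simp add: asc_nat)
  also have "\<dots> = (?a \<cdot> Asc V (Cod V f) (Cod V g) (Cod V h)) \<cdot> (((f \<odot> g) \<odot> h) \<cdot> ?b)"
    using assms by simp
  also have "\<dots> = ((f \<odot> g) \<odot> h) \<cdot> ?b" using assms by (simp add: ai_asc)
  finally show ?thesis .
qed

lemma tar_comp: "f \<in> Ar V \<Longrightarrow> g \<in> Ar V \<Longrightarrow> f' \<in> Ar V \<Longrightarrow> g' \<in> Ar V \<Longrightarrow>
   Cod V f = Dom V g \<Longrightarrow> Cod V f' = Dom V g' \<Longrightarrow> (g \<cdot> f) \<odot> (g' \<cdot> f') = (g \<odot> g') \<cdot> (f \<odot> f')"
  using interchange by simp

lemma uV_comp_ar[simp]: "a \<in> Ob V \<Longrightarrow> b \<in> Ob V \<Longrightarrow> c \<in> Ob V \<Longrightarrow> uV_comp V a b c \<in> Ar V"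
  and uV_comp_dom[simp]: "a \<in> Ob V \<Longrightarrow> b \<in> Ob V \<Longrightarrow> c \<in> Ob V \<Longrightarrow> Dom V (uV_comp V a b c) = Tob V (Ih V b c) (Ih V a b)"
  and uV_comp_cod[simp]: "a \<in> Ob V \<Longrightarrow> b \<in> Ob V \<Longrightarrow> c \<in> Ob V \<Longrightarrow> Cod V (uV_comp V a b c) = Ih V a c"
  and uV_comp_eq: "a \<in> Ob V \<Longrightarrow> b \<in> Ob V \<Longrightarrow> c \<in> Ob V \<Longrightarrow> Ev V a c \<cdot> (uV_comp V a b c \<odot> \<one> a) =
     Ev V b c \<cdot> ((\<one> (Ih V b c) \<odot> Ev V a b) \<cdot> Asc V (Ih V b c) (Ih V a b) a)"
  unfolding uV_comp_def by (simp_all add: cur_eq)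

definition Dd where "Dd j k X f = Ev V k X \<cdot> ((Ev V j (Ih V k X) \<cdot> (f \<odot> \<one> j)) \<odot> \<one> k)"

lemma Dd_ar[simp]: "f \<in> Ar V \<Longrightarrow> Cod V f = Ih V j (Ih V k X) \<Longrightarrow> j \<in> Ob V \<Longrightarrow> k \<in> Ob V \<Longrightarrow> X \<in> Ob V \<Longrightarrow> Dd j k X f \<in> Ar V"
  and Dd_dom[simp]: "f \<in> Ar V \<Longrightarrow> Cod V f = Ih V j (Ih V k X) \<Longrightarrow> j \<in> Ob V \<Longrightarrow> k \<in> Ob V \<Longrightarrow> X \<in> Ob V \<Longrightarrow> Dom V (Dd j k X f) = Tob V (Tob V (Dom V f) j) k"
  and Dd_cod[simp]: "f \<in> Ar V \<Longrightarrow> Cod V f = Ih V j (Ih V k X) \<Longrightarrow> j \<in> Ob V \<Longrightarrow> k \<in> Ob V \<Longrightarrow> X \<in> Ob V \<Longrightarrow> Cod V (Dd j k X f) = X"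
  unfolding Dd_def by simp_all

lemma Dd_nat: assumes "f \<in> Ar V" "Cod V f = Ih V j (Ih V k X)" "j \<in> Ob V" "k \<in> Ob V" "X \<in> Ob V"
  "h \<in> Ar V" "Cod V h = Dom V f"
  shows "Dd j k X (f \<cdot> h) = Dd j k X f \<cdot> ((h \<odot> \<one> j) \<odot> \<one> k)"
proof -
  have "(f \<cdot> h) \<odot> \<one> j = (f \<odot> \<one> j) \<cdot> (h \<odot> \<one> j)" using assms by (simp add: interchange)
  then have "Ev V j (Ih V k X) \<cdot> ((f \<cdot> h) \<odot> \<one> j) = (Ev V j (Ih V k X) \<cdot> (f \<odot> \<one> j)) \<cdot> (h \<odot> \<one> j)"
    using assms by simp
  then have "(Ev V j (Ih V k X) \<cdot> ((f \<cdot> h) \<odot> \<one> j)) \<odot> \<one> k = ((Ev V j (Ih V k X) \<cdot> (f \<odot> \<one> j)) \<odot> \<one> k) \<cdot> ((h \<odot> \<one> j) \<odot> \<one> k)"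
    using assms by (simp add: interchange)
  then show ?thesis unfolding Dd_def using assms by simp
qed

lemma Dd_inj: assumes "f \<in> Ar V" "Cod V f = Ih V j (Ih V k X)" "f' \<in> Ar V" "Cod V f' = Ih V j (Ih V k X)"
  "Dom V f = Dom V f'" "j \<in> Ob V" "k \<in> Ob V" "X \<in> Ob V" "Dd j k X f = Dd j k X f'"
  shows "f = f'"
proof -
  have "Ev V j (Ih V k X) \<cdot> (f \<odot> \<one> j) = Ev V j (Ih V k X) \<cdot> (f' \<odot> \<one> j)"
    by (rule ev_inj[of _ _ k X]) (use assms in \<open>auto simp: Dd_def\<close>)
  then show ?thesis by (rule ev_inj[rotated -1]) (use assms in auto)
qed

lemma cot_iso: assumes ob: "j \<in> Ob V" "k \<in> Ob V" "c \<in> Ob V" "X \<in> Ob V"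
  and s: "s \<in> Ar V" "Dom V s = Tob V j k" "Cod V s = c"
  and si: "si \<in> Ar V" "Dom V si = c" "Cod V si = Tob V j k" "si \<cdot> s = \<one> (Tob V j k)" "s \<cdot> si = \<one> c"
  shows "iso_in V (cur V (Ih V c X) j (Ih V k X) (uV_comp V k c X \<cdot> (\<one> (Ih V c X) \<odot> cur V j k c s)))"
proof -
  define M where "M = Ih V c X"
  define N where "N = Ih V j (Ih V k X)"
  define e where "e = cur V j k c s"
  define \<phi> where "\<phi> = cur V M j (Ih V k X) (uV_comp V k c X \<cdot> (\<one> M \<odot> e))"
  have [simp]: "M \<in> Ob V" "N \<in> Ob V" unfolding M_def N_def using ob by auto
  have MN[simp]: "Ih V c X = M" "Ih V j (Ih V k X) = N" unfolding M_def N_def by auto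
  have e[simp]: "e \<in> Ar V" "Dom V e = j" "Cod V e = Ih V k c" unfolding e_def using ob s by auto
  have ee: "Ev V k c \<cdot> (e \<odot> \<one> k) = s" unfolding e_def using ob s by (simp add: cur_eq)
  have phi[simp]: "\<phi> \<in> Ar V" "Dom V \<phi> = M" "Cod V \<phi> = N" unfolding \<phi>_def using ob by auto
  have Dphi: "Dd j k X \<phi> = Ev V c X \<cdot> ((\<one> M \<odot> s) \<cdot> Asc V M j k)"
  proof -
    have "Dd j k X \<phi> = Ev V k X \<cdot> ((uV_comp V k c X \<cdot> (\<one> M \<odot> e)) \<odot> \<one> k)"
      unfolding Dd_def \<phi>_def using ob by (simp add: cur_eq)
    also have "\<dots> = Ev V k X \<cdot> ((uV_comp V k c X \<odot> \<one> k) \<cdot> ((\<one> M \<odot> e) \<odot> \<one> k))"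
      using ob by (simp add: interchange)
    also have "\<dots> = (Ev V k X \<cdot> (uV_comp V k c X \<odot> \<one> k)) \<cdot> ((\<one> M \<odot> e) \<odot> \<one> k)"
      using ob by (simp)
    also have "\<dots> = Ev V c X \<cdot> ((\<one> M \<odot> Ev V k c) \<cdot> (Asc V M (Ih V k c) k \<cdot> ((\<one> M \<odot> e) \<odot> \<one> k)))"
      using ob by (simp add: uV_comp_eq)
    also have "Asc V M (Ih V k c) k \<cdot> ((\<one> M \<odot> e) \<odot> \<one> k) = (\<one> M \<odot> (e \<odot> \<one> k)) \<cdot> Asc V M j k"
      using asc_nat[of "\<one> M" e "\<one> k"] ob by simp
    also have "(\<one> M \<odot> Ev V k c) \<cdot> ((\<one> M \<odot> (e \<odot> \<one> k)) \<cdot> Asc V M j k) = ((\<one> M \<odot> Ev V k c) \<cdot> (\<one> M \<odot> (e \<odot> \<one> k))) \<cdot> Asc V M j k"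
      using ob by simp
    also have "(\<one> M \<odot> Ev V k c) \<cdot> (\<one> M \<odot> (e \<odot> \<one> k)) = \<one> M \<odot> s"
      using ob by (simp add: interchange ee)
    finally show ?thesis .
  qed
  define \<psi> where "\<psi> = cur V N c X (Dd j k X (\<one> N) \<cdot> (ai N j k \<cdot> (\<one> N \<odot> si)))"
  have psi[simp]: "\<psi> \<in> Ar V" "Dom V \<psi> = N" "Cod V \<psi> = M" unfolding \<psi>_def using ob si
    by (auto)
  have psie: "Ev V c X \<cdot> (\<psi> \<odot> \<one> c) = Dd j k X (\<one> N) \<cdot> (ai N j k \<cdot> (\<one> N \<odot> si))"
    unfolding \<psi>_def using ob si by (intro cur_eq) (auto)
  have 1: "\<psi> \<cdot> \<phi> = \<one> M"
  proof -
    have "Ev V c X \<cdot> ((\<psi> \<cdot> \<phi>) \<odot> \<one> c) = (Ev V c X \<cdot> (\<psi> \<odot> \<one> c)) \<cdot> (\<phi> \<odot> \<one> c)"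
      using ob by (simp add: interchange)
    also have "\<dots> = Dd j k X (\<one> N) \<cdot> (ai N j k \<cdot> ((\<one> N \<odot> si) \<cdot> (\<phi> \<odot> \<one> c)))"
      using ob si by (simp add: psie)
    also have "(\<one> N \<odot> si) \<cdot> (\<phi> \<odot> \<one> c) = (\<phi> \<odot> \<one> (Tob V j k)) \<cdot> (\<one> M \<odot> si)"
      using ob si by (simp add: interchange)
    also have "ai N j k \<cdot> ((\<phi> \<odot> \<one> (Tob V j k)) \<cdot> (\<one> M \<odot> si)) = (ai N j k \<cdot> (\<phi> \<odot> (\<one> j \<odot> \<one> k))) \<cdot> (\<one> M \<odot> si)"
      using ob si by simp
    also have "ai N j k \<cdot> (\<phi> \<odot> (\<one> j \<odot> \<one> k)) = ((\<phi> \<odot> \<one> j) \<odot> \<one> k) \<cdot> ai M j k"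
      using ai_nat[of \<phi> "\<one> j" "\<one> k"] ob by simp
    also have "(((\<phi> \<odot> \<one> j) \<odot> \<one> k) \<cdot> ai M j k) \<cdot> (\<one> M \<odot> si) = ((\<phi> \<odot> \<one> j) \<odot> \<one> k) \<cdot> (ai M j k \<cdot> (\<one> M \<odot> si))"
      using ob si by simp
    also have "Dd j k X (\<one> N) \<cdot> (((\<phi> \<odot> \<one> j) \<odot> \<one> k) \<cdot> (ai M j k \<cdot> (\<one> M \<odot> si))) =
        (Dd j k X (\<one> N) \<cdot> ((\<phi> \<odot> \<one> j) \<odot> \<one> k)) \<cdot> (ai M j k \<cdot> (\<one> M \<odot> si))"
      using ob si by (simp)
    also have "Dd j k X (\<one> N) \<cdot> ((\<phi> \<odot> \<one> j) \<odot> \<one> k) = Dd j k X \<phi>"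
      using Dd_nat[of "\<one> N" j k X \<phi>] ob by (simp)
    also have "Dd j k X \<phi> \<cdot> (ai M j k \<cdot> (\<one> M \<odot> si)) = Ev V c X \<cdot> (\<one> M \<odot> s) \<cdot> ((Asc V M j k \<cdot> ai M j k) \<cdot> (\<one> M \<odot> si))"
      using ob s si by (simp add: Dphi)
    also have "\<dots> = Ev V c X \<cdot> ((\<one> M \<odot> s) \<cdot> (\<one> M \<odot> si))"
      using ob s si by (simp add: asc_ai)
    also have "\<dots> = Ev V c X \<cdot> (\<one> M \<odot> \<one> c)"
      using ob s si by (simp add: interchange)
    finally have "Ev V c X \<cdot> ((\<psi> \<cdot> \<phi>) \<odot> \<one> c) = Ev V c X \<cdot> (\<one> M \<odot> \<one> c)" .
    then show ?thesis by (rule ev_inj[rotated -1]) (use ob in \<open>auto simp:\<close>)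
  qed
  have 2: "\<phi> \<cdot> \<psi> = \<one> N"
  proof -
    have "Dd j k X (\<phi> \<cdot> \<psi>) = Dd j k X \<phi> \<cdot> ((\<psi> \<odot> \<one> j) \<odot> \<one> k)"
      using Dd_nat[of \<phi> j k X \<psi>] ob by (simp)
    also have "\<dots> = Ev V c X \<cdot> ((\<one> M \<odot> s) \<cdot> (Asc V M j k \<cdot> ((\<psi> \<odot> \<one> j) \<odot> \<one> k)))"
      using ob s by (simp add: Dphi)
    also have "Asc V M j k \<cdot> ((\<psi> \<odot> \<one> j) \<odot> \<one> k) = (\<psi> \<odot> \<one> (Tob V j k)) \<cdot> Asc V N j k"
      using asc_nat[of \<psi> "\<one> j" "\<one> k"] ob by simp
    also have "(\<one> M \<odot> s) \<cdot> ((\<psi> \<odot> \<one> (Tob V j k)) \<cdot> Asc V N j k) = (\<psi> \<odot> \<one> c) \<cdot> ((\<one> N \<odot> s) \<cdot> Asc V N j k)"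
    proof -
      have "(\<one> M \<odot> s) \<cdot> (\<psi> \<odot> \<one> (Tob V j k)) = (\<psi> \<odot> \<one> c) \<cdot> (\<one> N \<odot> s)"
        using ob s by (simp add: interchange)
      then show ?thesis using ob s by (simp del: assoc add: assoc[symmetric])
    qed
    also have "Ev V c X \<cdot> ((\<psi> \<odot> \<one> c) \<cdot> ((\<one> N \<odot> s) \<cdot> Asc V N j k)) =
        (Ev V c X \<cdot> (\<psi> \<odot> \<one> c)) \<cdot> ((\<one> N \<odot> s) \<cdot> Asc V N j k)"
      using ob s by (simp)
    also have "\<dots> = Dd j k X (\<one> N) \<cdot> (ai N j k \<cdot> (((\<one> N \<odot> si) \<cdot> (\<one> N \<odot> s)) \<cdot> Asc V N j k))"
      using ob s si by (simp add: psie)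
    also have "(\<one> N \<odot> si) \<cdot> (\<one> N \<odot> s) = \<one> (Tob V N (Tob V j k))"
      using ob s si by (simp add: interchange)
    also have "ai N j k \<cdot> (\<one> (Tob V N (Tob V j k)) \<cdot> Asc V N j k) = \<one> (Tob V (Tob V N j) k)"
      using ob by (simp add: ai_asc)
    also have "Dd j k X (\<one> N) \<cdot> \<one> (Tob V (Tob V N j) k) = Dd j k X (\<one> N)"
      using ob by (simp)
    finally show ?thesis by (rule Dd_inj[rotated -1]) (use ob in \<open>auto simp:\<close>)
  qed
  show ?thesis unfolding \<phi>_def[symmetric] M_def[symmetric] e_def[symmetric]
    by (rule iso_intro[of _ \<psi>]) (use 1 2 in auto)
qed

lemma jop_cot: assumes J: "Jo \<subseteq> Ob V" and jkc: "j \<in> Ob V" "k \<in> Jo" "c \<in> Jo"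
  and s: "s \<in> Ar V" "Dom V s = Tob V j k" "Cod V s = c"
  and si: "si \<in> Ar V" "Dom V si = c" "Cod V si = Tob V j k" "si \<cdot> s = \<one> (Tob V j k)" "s \<cdot> si = \<one> c"
  shows "is_cotensor V (jop V Jo) j k c (cur V j k c s)"
  unfolding is_cotensor_def
proof (intro conjI ballI)
  have ob: "k \<in> Ob V" "c \<in> Ob V" using J jkc by auto
  show "j \<in> Ob V" "k \<in> VOb (jop V Jo)" "c \<in> VOb (jop V Jo)" using jkc by (auto simp: jop_def)
  show "hom V (cur V j k c s) j (VHom (jop V Jo) c k)" using ob jkc s unfolding hom_def jop_def by auto
  fix X assume "X \<in> VOb (jop V Jo)"
  then have X: "X \<in> Ob V" using J by (auto simp: jop_def)
  have "cmpar V (jop V Jo) j k c (cur V j k c s) X =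
     cur V (Ih V c X) j (Ih V k X) ((uV_comp V k c X \<cdot> Sy V (Ih V k c) (Ih V c X)) \<cdot>
        (Sy V (Ih V c X) (Ih V k c) \<cdot> (\<one> (Ih V c X) \<odot> cur V j k c s)))"
    unfolding cmpar_def jop_def by simp
  also have "(uV_comp V k c X \<cdot> Sy V (Ih V k c) (Ih V c X)) \<cdot>
        (Sy V (Ih V c X) (Ih V k c) \<cdot> (\<one> (Ih V c X) \<odot> cur V j k c s))
      = uV_comp V k c X \<cdot> ((Sy V (Ih V k c) (Ih V c X) \<cdot> Sy V (Ih V c X) (Ih V k c)) \<cdot> (\<one> (Ih V c X) \<odot> cur V j k c s))"
    using ob X jkc s by simp
  also have "\<dots> = uV_comp V k c X \<cdot> (\<one> (Ih V c X) \<odot> cur V j k c s)"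
    using ob X jkc s by (simp add: sy_inv)
  finally show "iso_in V (cmpar V (jop V Jo) j k c (cur V j k c s) X)"
    using cot_iso[OF jkc(1) ob X s si] by simp
qed

lemma jop_cot_L: "Jo \<subseteq> Ob V \<Longrightarrow> j \<in> Jo \<Longrightarrow> k \<in> Jo \<Longrightarrow> Tob V j k \<in> Jo \<Longrightarrow>
   is_cotensor V (jop V Jo) j k (Tob V j k) (coev V j k)"
  unfolding coev_def by (rule jop_cot[where si="\<one> (Tob V j k)"]) (auto dest: subsetD)

lemma jop_cot_R: "Jo \<subseteq> Ob V \<Longrightarrow> j \<in> Jo \<Longrightarrow> k \<in> Jo \<Longrightarrow> Tob V k j \<in> Jo \<Longrightarrow>
   is_cotensor V (jop V Jo) j k (Tob V k j) (coev' V j k)"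
proof -
  assume a: "Jo \<subseteq> Ob V" "j \<in> Jo" "k \<in> Jo" "Tob V k j \<in> Jo"
  then have "j \<in> Ob V" "k \<in> Ob V" by auto
  with a show ?thesis unfolding coev'_def by (intro jop_cot[where si="Sy V k j"]) (auto simp: sy_inv)
qed

end


context smc begin
section \<open>enriched categories\<close>

lemma vhom_ob[simp]: "is_vcat V T \<Longrightarrow> a \<in> VOb T \<Longrightarrow> b \<in> VOb T \<Longrightarrow> VHom T a b \<in> Ob V"
  unfolding is_vcat_def by blast

lemma vcomp_ar[simp]: "is_vcat V T \<Longrightarrow> a \<in> VOb T \<Longrightarrow> b \<in> VOb T \<Longrightarrow> c \<in> VOb T \<Longrightarrow> VComp T a b c \<in> Ar V"
  and vcomp_dom[simp]: "is_vcat V T \<Longrightarrow> a \<in> VOb T \<Longrightarrow> b \<in> VOb T \<Longrightarrow> c \<in> VOb T \<Longrightarrow> Dom V (VComp T a b c) = Tob V (VHom T b c) (VHom T a b)"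
  and vcomp_cod[simp]: "is_vcat V T \<Longrightarrow> a \<in> VOb T \<Longrightarrow> b \<in> VOb T \<Longrightarrow> c \<in> VOb T \<Longrightarrow> Cod V (VComp T a b c) = VHom T a c"
  unfolding is_vcat_def hom_def by blast+

lemma vfun_ar[simp]: "vfun V C D F \<Longrightarrow> a \<in> VOb C \<Longrightarrow> b \<in> VOb C \<Longrightarrow> F a b \<in> Ar V"
  and vfun_dom[simp]: "vfun V C D F \<Longrightarrow> a \<in> VOb C \<Longrightarrow> b \<in> VOb C \<Longrightarrow> Dom V (F a b) = VHom C a b"
  and vfun_cod[simp]: "vfun V C D F \<Longrightarrow> a \<in> VOb C \<Longrightarrow> b \<in> VOb C \<Longrightarrow> Cod V (F a b) = VHom D a b"
  and vfun_comp: "vfun V C D F \<Longrightarrow> a \<in> VOb C \<Longrightarrow> b \<in> VOb C \<Longrightarrow> c \<in> VOb C \<Longrightarrow>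
     F a c \<cdot> VComp C a b c = VComp D a b c \<cdot> (F b c \<odot> F a b)"
  and vfun_ob: "vfun V C D F \<Longrightarrow> VOb C = VOb D"
  unfolding vfun_def hom_def by blast+

lemma cmpar_ar[simp]: "is_vcat V T \<Longrightarrow> X \<in> VOb T \<Longrightarrow> c \<in> VOb T \<Longrightarrow> c0 \<in> VOb T \<Longrightarrow> v \<in> Ob V \<Longrightarrow>
    e \<in> Ar V \<Longrightarrow> Dom V e = v \<Longrightarrow> Cod V e = VHom T c c0 \<Longrightarrow> cmpar V T v c0 c e X \<in> Ar V"
  and cmpar_dom[simp]: "is_vcat V T \<Longrightarrow> X \<in> VOb T \<Longrightarrow> c \<in> VOb T \<Longrightarrow> c0 \<in> VOb T \<Longrightarrow> v \<in> Ob V \<Longrightarrow>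
    e \<in> Ar V \<Longrightarrow> Dom V e = v \<Longrightarrow> Cod V e = VHom T c c0 \<Longrightarrow> Dom V (cmpar V T v c0 c e X) = VHom T X c"
  and cmpar_cod[simp]: "is_vcat V T \<Longrightarrow> X \<in> VOb T \<Longrightarrow> c \<in> VOb T \<Longrightarrow> c0 \<in> VOb T \<Longrightarrow> v \<in> Ob V \<Longrightarrow>
    e \<in> Ar V \<Longrightarrow> Dom V e = v \<Longrightarrow> Cod V e = VHom T c c0 \<Longrightarrow> Cod V (cmpar V T v c0 c e X) = Ih V v (VHom T X c0)"
  unfolding cmpar_def by simp_all

lemma cot_e: "is_cotensor V T v c0 c e \<Longrightarrow> e \<in> Ar V \<and> Dom V e = v \<and> Cod V e = VHom T c c0 \<and> v \<in> Ob V \<and> c0 \<in> VOb T \<and> c \<in> VOb T"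
  unfolding is_cotensor_def hom_def by blast

lemma indmap_prop: assumes T: "is_vcat V T" and cot: "is_cotensor V T v K' c' e'"
  and K: "K \<in> VOb T" "c \<in> VOb T" and e: "e \<in> Ar V" "Dom V e = v" "Cod V e = VHom T c K"
  shows "indmap V T v K K' c e c' e' \<in> Ar V \<and> Dom V (indmap V T v K K' c e c' e') = VHom T K K'
     \<and> Cod V (indmap V T v K K' c e c' e') = VHom T c c' \<and>
     cmpar V T v K' c' e' c \<cdot> indmap V T v K K' c e c' e' =
     cur V (VHom T K K') v (VHom T c K') (VComp T c K K' \<cdot> (\<one> (VHom T K K') \<odot> e))"
proof -
  have ce: "e' \<in> Ar V" "Dom V e' = v" "Cod V e' = VHom T c' K'" "v \<in> Ob V" "K' \<in> VOb T" "c' \<in> VOb T"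
    using cot_e[OF cot] by auto
  let ?m = "cmpar V T v K' c' e' c"
  let ?r = "cur V (VHom T K K') v (VHom T c K') (VComp T c K K' \<cdot> (\<one> (VHom T K K') \<odot> e))"
  have iso: "iso_in V ?m" using cot K unfolding is_cotensor_def by blast
  then obtain q where q: "q \<in> Ar V" "Dom V q = Cod V ?m" "Cod V q = Dom V ?m" "?m \<cdot> q = \<one> (Cod V ?m)"
    unfolding iso_in_def hom_def by blast
  have m[simp]: "?m \<in> Ar V" "Dom V ?m = VHom T c c'" "Cod V ?m = Ih V v (VHom T c K')"
    using T K ce by simp_all
  have r[simp]: "?r \<in> Ar V" "Dom V ?r = VHom T K K'" "Cod V ?r = Ih V v (VHom T c K')"
    using T K ce e by simp_all
  have q2: "?m \<cdot> q = \<one> (Ih V v (VHom T c K'))" using q(4) by simp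
  have qr: "q \<cdot> ?r \<in> Ar V" "Dom V (q \<cdot> ?r) = VHom T K K'" "Cod V (q \<cdot> ?r) = VHom T c c'"
    using q by simp_all
  have mqr: "?m \<cdot> (q \<cdot> ?r) = ?r"
  proof -
    have "?m \<cdot> (q \<cdot> ?r) = (?m \<cdot> q) \<cdot> ?r" using q by (intro assoc[symmetric]) simp_all
    also have "\<dots> = ?r" using q2 by simp
    finally show ?thesis .
  qed
  have ex: "\<exists>!g. hom V g (VHom T K K') (VHom T c c') \<and> ?m \<cdot> g = ?r"
  proof
    show "hom V (q \<cdot> ?r) (VHom T K K') (VHom T c c') \<and> ?m \<cdot> (q \<cdot> ?r) = ?r"
      using qr mqr unfolding hom_def by blast
    fix g assume g: "hom V g (VHom T K K') (VHom T c c') \<and> ?m \<cdot> g = ?r"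
    show "g = q \<cdot> ?r"
      by (rule iso_mono[OF iso]) (use g qr mqr in \<open>auto simp: hom_def\<close>)
  qed
  have "hom V (indmap V T v K K' c e c' e') (VHom T K K') (VHom T c c') \<and> ?m \<cdot> indmap V T v K K' c e c' e' = ?r"
    unfolding indmap_def by (rule theI'[OF ex])
  then show ?thesis unfolding hom_def by blast
qed

lemma indmap_uniq: assumes T: "is_vcat V T" and cot: "is_cotensor V T v K' c' e'"
  and K: "K \<in> VOb T" "c \<in> VOb T" and e: "e \<in> Ar V" "Dom V e = v" "Cod V e = VHom T c K"
  and g: "g \<in> Ar V" "Dom V g = VHom T K K'" "Cod V g = VHom T c c'"
  and eq: "cmpar V T v K' c' e' c \<cdot> g = cur V (VHom T K K') v (VHom T c K') (VComp T c K K' \<cdot> (\<one> (VHom T K K') \<odot> e))"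
  shows "g = indmap V T v K K' c e c' e'"
proof -
  have iso: "iso_in V (cmpar V T v K' c' e' c)" using cot K unfolding is_cotensor_def by blast
  have ce: "e' \<in> Ar V" "Dom V e' = v" "Cod V e' = VHom T c' K'" "v \<in> Ob V" "K' \<in> VOb T" "c' \<in> VOb T"
    using cot_e[OF cot] by auto
  have P: "indmap V T v K K' c e c' e' \<in> Ar V" "Dom V (indmap V T v K K' c e c' e') = VHom T K K'"
     "Cod V (indmap V T v K K' c e c' e') = VHom T c c'" "cmpar V T v K' c' e' c \<cdot> indmap V T v K K' c e c' e' =
     cur V (VHom T K K') v (VHom T c K') (VComp T c K K' \<cdot> (\<one> (VHom T K K') \<odot> e))"
    using indmap_prop[OF T cot K e] by blast+
  show ?thesis by (rule iso_mono[OF iso]) (use P g eq T K ce in simp_all)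
qed

lemma cmpar_nat: assumes T: "is_vcat V T" and U: "is_vcat V U" and F: "vfun V T U F"
  and ob: "X \<in> VOb T" "c' \<in> VOb T" "K' \<in> VOb T" "v \<in> Ob V"
  and e: "e' \<in> Ar V" "Dom V e' = v" "Cod V e' = VHom T c' K'"
  shows "cmpar V U v K' c' (F c' K' \<cdot> e') X \<cdot> F X c' =
    cur V (Ih V v (VHom T X K')) v (VHom U X K') (F X K' \<cdot> Ev V v (VHom T X K')) \<cdot> cmpar V T v K' c' e' X"
proof -
  have obU: "X \<in> VOb U" "c' \<in> VOb U" "K' \<in> VOb U" using ob vfun_ob[OF F] by auto
  note simps = T U F ob obU e
  have a: "(\<one> (VHom U X c') \<odot> (F c' K' \<cdot> e')) \<cdot> (F X c' \<odot> \<one> v) = (F X c' \<odot> F c' K') \<cdot> (\<one> (VHom T X c') \<odot> e')"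
    using simps by (simp add: interchange)
  have b: "Sy V (VHom U X c') (VHom U c' K') \<cdot> (F X c' \<odot> F c' K') = (F c' K' \<odot> F X c') \<cdot> Sy V (VHom T X c') (VHom T c' K')"
    using sy_nat[of "F X c'" "F c' K'"] simps by simp
  have c: "VComp U X c' K' \<cdot> (F c' K' \<odot> F X c') = F X K' \<cdot> VComp T X c' K'"
    using vfun_comp[OF F ob(1,2,3)] by simp
  have "(VComp U X c' K' \<cdot> (Sy V (VHom U X c') (VHom U c' K') \<cdot> (\<one> (VHom U X c') \<odot> (F c' K' \<cdot> e')))) \<cdot> (F X c' \<odot> \<one> v)
      = VComp U X c' K' \<cdot> (Sy V (VHom U X c') (VHom U c' K') \<cdot> ((\<one> (VHom U X c') \<odot> (F c' K' \<cdot> e')) \<cdot> (F X c' \<odot> \<one> v)))"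
    using simps by simp
  also have "\<dots> = VComp U X c' K' \<cdot> ((Sy V (VHom U X c') (VHom U c' K') \<cdot> (F X c' \<odot> F c' K')) \<cdot> (\<one> (VHom T X c') \<odot> e'))"
    unfolding a using simps by simp
  also have "\<dots> = (VComp U X c' K' \<cdot> (F c' K' \<odot> F X c')) \<cdot> (Sy V (VHom T X c') (VHom T c' K') \<cdot> (\<one> (VHom T X c') \<odot> e'))"
    unfolding b using simps by simp
  also have "\<dots> = F X K' \<cdot> (VComp T X c' K' \<cdot> (Sy V (VHom T X c') (VHom T c' K') \<cdot> (\<one> (VHom T X c') \<odot> e')))"
    unfolding c using simps by simp
  finally have inner: "(VComp U X c' K' \<cdot> (Sy V (VHom U X c') (VHom U c' K') \<cdot> (\<one> (VHom U X c') \<odot> (F c' K' \<cdot> e')))) \<cdot> (F X c' \<odot> \<one> v)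
      = F X K' \<cdot> (VComp T X c' K' \<cdot> (Sy V (VHom T X c') (VHom T c' K') \<cdot> (\<one> (VHom T X c') \<odot> e')))" .
  have "cmpar V U v K' c' (F c' K' \<cdot> e') X \<cdot> F X c' =
     cur V (VHom T X c') v (VHom U X K') ((VComp U X c' K' \<cdot> (Sy V (VHom U X c') (VHom U c' K') \<cdot> (\<one> (VHom U X c') \<odot> (F c' K' \<cdot> e')))) \<cdot> (F X c' \<odot> \<one> v))"
    unfolding cmpar_def using simps by (subst cur_nat) simp_all
  also have "\<dots> = cur V (VHom T X c') v (Cod V (F X K')) (F X K' \<cdot> (VComp T X c' K' \<cdot> (Sy V (VHom T X c') (VHom T c' K') \<cdot> (\<one> (VHom T X c') \<odot> e'))))"
    unfolding inner using simps by simp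
  also have "\<dots> = cur V (Ih V v (VHom T X K')) v (Cod V (F X K')) (F X K' \<cdot> Ev V v (VHom T X K')) \<cdot> cmpar V T v K' c' e' X"
    unfolding cmpar_def using simps by (subst cur_post) simp_all
  finally show ?thesis using simps by simp
qed

lemma indmap_nat: assumes T: "is_vcat V T" and U: "is_vcat V U" and F: "vfun V T U F"
  and cotT: "is_cotensor V T v K' c' e'" and cotU: "is_cotensor V U v K' c' (F c' K' \<cdot> e')"
  and K: "K \<in> VOb T" "c \<in> VOb T" and e: "e \<in> Ar V" "Dom V e = v" "Cod V e = VHom T c K"
  shows "F c c' \<cdot> indmap V T v K K' c e c' e' = indmap V U v K K' c (F c K \<cdot> e) c' (F c' K' \<cdot> e') \<cdot> F K K'"
proof -
  have ce: "e' \<in> Ar V" "Dom V e' = v" "Cod V e' = VHom T c' K'" "v \<in> Ob V" "K' \<in> VOb T" "c' \<in> VOb T"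
    using cot_e[OF cotT] by auto
  have obU: "K \<in> VOb U" "c \<in> VOb U" "c' \<in> VOb U" "K' \<in> VOb U" using K ce vfun_ob[OF F] by auto
  note simps = T U F K e ce obU
  have fe: "F c K \<cdot> e \<in> Ar V" "Dom V (F c K \<cdot> e) = v" "Cod V (F c K \<cdot> e) = VHom U c K" using simps by simp_all
  have PT: "indmap V T v K K' c e c' e' \<in> Ar V" "Dom V (indmap V T v K K' c e c' e') = VHom T K K'"
     "Cod V (indmap V T v K K' c e c' e') = VHom T c c'" "cmpar V T v K' c' e' c \<cdot> indmap V T v K K' c e c' e' =
     cur V (VHom T K K') v (VHom T c K') (VComp T c K K' \<cdot> (\<one> (VHom T K K') \<odot> e))"
    using indmap_prop[OF T cotT K e] by blast+
  have PU: "indmap V U v K K' c (F c K \<cdot> e) c' (F c' K' \<cdot> e') \<in> Ar V"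
     "Dom V (indmap V U v K K' c (F c K \<cdot> e) c' (F c' K' \<cdot> e')) = VHom U K K'"
     "Cod V (indmap V U v K K' c (F c K \<cdot> e) c' (F c' K' \<cdot> e')) = VHom U c c'"
     "cmpar V U v K' c' (F c' K' \<cdot> e') c \<cdot> indmap V U v K K' c (F c K \<cdot> e) c' (F c' K' \<cdot> e') =
     cur V (VHom U K K') v (VHom U c K') (VComp U c K K' \<cdot> (\<one> (VHom U K K') \<odot> (F c K \<cdot> e)))"
    using indmap_prop[OF U cotU obU(1,2) fe] by blast+
  have iso: "iso_in V (cmpar V U v K' c' (F c' K' \<cdot> e') c)" using cotU obU unfolding is_cotensor_def by blast
  let ?mU = "cmpar V U v K' c' (F c' K' \<cdot> e') c" and ?mT = "cmpar V T v K' c' e' c"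
  let ?gT = "indmap V T v K K' c e c' e'" and ?gU = "indmap V U v K K' c (F c K \<cdot> e) c' (F c' K' \<cdot> e')"
  let ?post = "cur V (Ih V v (VHom T c K')) v (VHom U c K') (F c K' \<cdot> Ev V v (VHom T c K'))"
  have N: "?mU \<cdot> F c c' = ?post \<cdot> ?mT" using cmpar_nat[OF T U F K(2) ce(6,5,4) ce(1,2,3)] .
  have "?mU \<cdot> (F c c' \<cdot> ?gT) = (?mU \<cdot> F c c') \<cdot> ?gT" using simps PT by simp
  also have "\<dots> = ?post \<cdot> (?mT \<cdot> ?gT)" unfolding N using simps PT by simp
  also have "\<dots> = cur V (VHom T K K') v (Cod V (F c K')) (F c K' \<cdot> (VComp T c K K' \<cdot> (\<one> (VHom T K K') \<odot> e)))"
    unfolding PT(4) using simps by (subst cur_post) simp_all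
  also have "F c K' \<cdot> (VComp T c K K' \<cdot> (\<one> (VHom T K K') \<odot> e)) = (F c K' \<cdot> VComp T c K K') \<cdot> (\<one> (VHom T K K') \<odot> e)"
    using simps by simp
  also have "\<dots> = VComp U c K K' \<cdot> ((F K K' \<odot> F c K) \<cdot> (\<one> (VHom T K K') \<odot> e))"
    unfolding vfun_comp[OF F K(2,1) ce(5)] using simps by simp
  also have "(F K K' \<odot> F c K) \<cdot> (\<one> (VHom T K K') \<odot> e) = (\<one> (VHom U K K') \<odot> (F c K \<cdot> e)) \<cdot> (F K K' \<odot> \<one> v)"
    using simps by (simp add: interchange)
  also have "cur V (VHom T K K') v (Cod V (F c K')) (VComp U c K K' \<cdot> ((\<one> (VHom U K K') \<odot> (F c K \<cdot> e)) \<cdot> (F K K' \<odot> \<one> v)))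
     = cur V (VHom U K K') v (VHom U c K') (VComp U c K K' \<cdot> (\<one> (VHom U K K') \<odot> (F c K \<cdot> e))) \<cdot> F K K'"
    using simps by (subst cur_nat) simp_all
  also have "\<dots> = (?mU \<cdot> ?gU) \<cdot> F K K'" by (simp only: PU(4))
  also have "\<dots> = ?mU \<cdot> (?gU \<cdot> F K K')" by (rule assoc) (use simps PU in simp_all)
  finally have eq: "?mU \<cdot> (F c c' \<cdot> ?gT) = ?mU \<cdot> (?gU \<cdot> F K K')" .
  show ?thesis by (rule iso_mono[OF iso]) (use simps PT PU eq in simp_all)
qed

end


context smc begin

lemma jth: "Jtheory V Jo T \<tau> \<Longrightarrow> is_vcat V T \<and> VOb T = Jo \<and> vfun V (jop V Jo) T \<tau>"
  unfolding Jtheory_def by blast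

lemma jth_cot: "Jtheory V Jo T \<tau> \<Longrightarrow> j \<in> Jo \<Longrightarrow> k \<in> Jo \<Longrightarrow> c \<in> Jo \<Longrightarrow> is_cotensor V (jop V Jo) j k c e \<Longrightarrow>
   is_cotensor V T j k c (\<tau> c k \<cdot> e)"
  unfolding Jtheory_def by blast

lemma tau_typ: assumes "Jtheory V Jo T \<tau>" "a \<in> Jo" "b \<in> Jo"
  shows "\<tau> a b \<in> Ar V" "Dom V (\<tau> a b) = Ih V b a" "Cod V (\<tau> a b) = VHom T a b"
proof -
  have F: "vfun V (jop V Jo) T \<tau>" using jth[OF assms(1)] by blast
  have ob: "a \<in> VOb (jop V Jo)" "b \<in> VOb (jop V Jo)" using assms by (auto simp: jop_def)
  show "\<tau> a b \<in> Ar V" "Dom V (\<tau> a b) = Ih V b a" "Cod V (\<tau> a b) = VHom T a b"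
    using vfun_ar[OF F ob] vfun_dom[OF F ob] vfun_cod[OF F ob] by (auto simp: jop_def)
qed

lemma coev_typ: "j \<in> Ob V \<Longrightarrow> k \<in> Ob V \<Longrightarrow> coev V j k \<in> Ar V \<and> Dom V (coev V j k) = j \<and> Cod V (coev V j k) = Ih V k (Tob V j k)"
  unfolding coev_def by simp
lemma coev'_typ: "j \<in> Ob V \<Longrightarrow> k \<in> Ob V \<Longrightarrow> coev' V j k \<in> Ar V \<and> Dom V (coev' V j k) = j \<and> Cod V (coev' V j k) = Ih V k (Tob V k j)"
  unfolding coev'_def by simp

lemma eL_cot: assumes "arity_system V Jo" "Jtheory V Jo T \<tau>" "j \<in> Jo" "k \<in> Jo"
  shows "is_cotensor V T j k (Tob V j k) (eL V \<tau> j k)"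
proof -
  have J: "Jo \<subseteq> Ob V" "Tob V j k \<in> Jo" using assms(1,3,4) unfolding arity_system_def by auto
  show ?thesis unfolding eL_def
    by (rule jth_cot[OF assms(2,3,4) J(2)]) (rule jop_cot_L[OF J(1) assms(3,4) J(2)])
qed

lemma eR_cot: assumes "arity_system V Jo" "Jtheory V Jo T \<tau>" "j \<in> Jo" "k \<in> Jo"
  shows "is_cotensor V T j k (Tob V k j) (eR V \<tau> j k)"
proof -
  have J: "Jo \<subseteq> Ob V" "Tob V k j \<in> Jo" using assms(1,3,4) unfolding arity_system_def by auto
  show ?thesis unfolding eR_def
    by (rule jth_cot[OF assms(2,3,4) J(2)]) (rule jop_cot_R[OF J(1) assms(3,4) J(2)])
qed

lemma mor_e: assumes "theory_mor V Jo T \<tau> U \<upsilon> A" "Jtheory V Jo T \<tau>" "c \<in> Jo" "k \<in> Jo"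
   "x \<in> Ar V" "Cod V x = Ih V k c"
  shows "A c k \<cdot> (\<tau> c k \<cdot> x) = \<upsilon> c k \<cdot> x"
proof -
  have F: "vfun V T U A" and eq: "A c k \<cdot> \<tau> c k = \<upsilon> c k" using assms(1,3,4) unfolding theory_mor_def by auto
  have ob: "c \<in> VOb T" "k \<in> VOb T" using jth[OF assms(2)] assms by auto
  have "A c k \<cdot> (\<tau> c k \<cdot> x) = (A c k \<cdot> \<tau> c k) \<cdot> x"
    using tau_typ[OF assms(2) assms(3,4)] assms(5,6) F ob by simp
  then show ?thesis using eq by simp
qed

lemma eL_typ: assumes "arity_system V Jo" "Jtheory V Jo T \<tau>" "j \<in> Jo" "k \<in> Jo"
  shows "eL V \<tau> j k \<in> Ar V" "Dom V (eL V \<tau> j k) = j" "Cod V (eL V \<tau> j k) = VHom T (Tob V j k) k"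
  using cot_e[OF eL_cot[OF assms]] by auto

lemma eR_typ: assumes "arity_system V Jo" "Jtheory V Jo T \<tau>" "j \<in> Jo" "k \<in> Jo"
  shows "eR V \<tau> j k \<in> Ar V" "Dom V (eR V \<tau> j k) = j" "Cod V (eR V \<tau> j k) = VHom T (Tob V k j) k"
  using cot_e[OF eR_cot[OF assms]] by auto

lemma lfun_typ: assumes a: "arity_system V Jo" and T: "Jtheory V Jo T \<tau>" and j: "j \<in> Jo" "k \<in> Jo" "k' \<in> Jo"
  shows "lfun V T \<tau> j k k' \<in> Ar V" "Dom V (lfun V T \<tau> j k k') = VHom T k k'"
    "Cod V (lfun V T \<tau> j k k') = VHom T (Tob V j k) (Tob V j k')"
proof -
  have J: "Tob V j k \<in> Jo" using a j unfolding arity_system_def by auto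
  have T': "is_vcat V T" "VOb T = Jo" using jth[OF T] by auto
  show "lfun V T \<tau> j k k' \<in> Ar V" "Dom V (lfun V T \<tau> j k k') = VHom T k k'"
    "Cod V (lfun V T \<tau> j k k') = VHom T (Tob V j k) (Tob V j k')"
    unfolding lfun_def using indmap_prop[OF T'(1) eL_cot[OF a T j(1,3)] _ _ eL_typ[OF a T j(1,2)]] T' J j by auto
qed

lemma rfun_typ: assumes a: "arity_system V Jo" and T: "Jtheory V Jo T \<tau>" and j: "j \<in> Jo" "k \<in> Jo" "k' \<in> Jo"
  shows "rfun V T \<tau> j k k' \<in> Ar V" "Dom V (rfun V T \<tau> j k k') = VHom T k k'"
    "Cod V (rfun V T \<tau> j k k') = VHom T (Tob V k j) (Tob V k' j)"
proof -
  have J: "Tob V k j \<in> Jo" using a j unfolding arity_system_def by auto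
  have T': "is_vcat V T" "VOb T = Jo" using jth[OF T] by auto
  show "rfun V T \<tau> j k k' \<in> Ar V" "Dom V (rfun V T \<tau> j k k') = VHom T k k'"
    "Cod V (rfun V T \<tau> j k k') = VHom T (Tob V k j) (Tob V k' j)"
    unfolding rfun_def using indmap_prop[OF T'(1) eR_cot[OF a T j(1,3)] _ _ eR_typ[OF a T j(1,2)]] T' J j by auto
qed

lemma eL_mor: assumes a: "arity_system V Jo" and T: "Jtheory V Jo T \<tau>" and M: "theory_mor V Jo T \<tau> U \<upsilon> A"
  and j: "j \<in> Jo" "k \<in> Jo"
  shows "A (Tob V j k) k \<cdot> eL V \<tau> j k = eL V \<upsilon> j k"
proof -
  have J: "Tob V j k \<in> Jo" "j \<in> Ob V" "k \<in> Ob V" using a j unfolding arity_system_def by auto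
  show ?thesis unfolding eL_def using coev_typ[OF J(2,3)] by (intro mor_e[OF M T J(1) j(2)]) auto
qed

lemma eR_mor: assumes a: "arity_system V Jo" and T: "Jtheory V Jo T \<tau>" and M: "theory_mor V Jo T \<tau> U \<upsilon> A"
  and j: "j \<in> Jo" "k \<in> Jo"
  shows "A (Tob V k j) k \<cdot> eR V \<tau> j k = eR V \<upsilon> j k"
proof -
  have J: "Tob V k j \<in> Jo" "j \<in> Ob V" "k \<in> Ob V" using a j unfolding arity_system_def by auto
  show ?thesis unfolding eR_def using coev'_typ[OF J(2,3)] by (intro mor_e[OF M T J(1) j(2)]) auto
qed

lemma lfun_nat: assumes a: "arity_system V Jo" and T: "Jtheory V Jo T \<tau>" and U: "Jtheory V Jo U \<upsilon>"
  and M: "theory_mor V Jo T \<tau> U \<upsilon> A" and j: "j \<in> Jo" "k \<in> Jo" "k' \<in> Jo"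
  shows "A (Tob V j k) (Tob V j k') \<cdot> lfun V T \<tau> j k k' = lfun V U \<upsilon> j k k' \<cdot> A k k'"
proof -
  have J: "Tob V j k \<in> Jo" using a j unfolding arity_system_def by auto
  have T': "is_vcat V T" "VOb T = Jo" using jth[OF T] by auto
  have U': "is_vcat V U" "VOb U = Jo" using jth[OF U] by auto
  have F: "vfun V T U A" using M unfolding theory_mor_def by blast
  have cotU: "is_cotensor V U j k' (Tob V j k') (A (Tob V j k') k' \<cdot> eL V \<tau> j k')"
    unfolding eL_mor[OF a T M j(1,3)] by (rule eL_cot[OF a U j(1,3)])
  have "A (Tob V j k) (Tob V j k') \<cdot> lfun V T \<tau> j k k' =
      indmap V U j k k' (Tob V j k) (A (Tob V j k) k \<cdot> eL V \<tau> j k) (Tob V j k') (A (Tob V j k') k' \<cdot> eL V \<tau> j k') \<cdot> A k k'"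
    unfolding lfun_def
    by (rule indmap_nat[OF T'(1) U'(1) F eL_cot[OF a T j(1,3)] cotU _ _ eL_typ[OF a T j(1,2)]]) (use T' J j in auto)
  then show ?thesis unfolding lfun_def eL_mor[OF a T M j(1,2)] eL_mor[OF a T M j(1,3)] .
qed

lemma rfun_nat: assumes a: "arity_system V Jo" and T: "Jtheory V Jo T \<tau>" and U: "Jtheory V Jo U \<upsilon>"
  and M: "theory_mor V Jo T \<tau> U \<upsilon> A" and j: "j \<in> Jo" "k \<in> Jo" "k' \<in> Jo"
  shows "A (Tob V k j) (Tob V k' j) \<cdot> rfun V T \<tau> j k k' = rfun V U \<upsilon> j k k' \<cdot> A k k'"
proof -
  have J: "Tob V k j \<in> Jo" using a j unfolding arity_system_def by auto
  have T': "is_vcat V T" "VOb T = Jo" using jth[OF T] by auto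
  have U': "is_vcat V U" "VOb U = Jo" using jth[OF U] by auto
  have F: "vfun V T U A" using M unfolding theory_mor_def by blast
  have cotU: "is_cotensor V U j k' (Tob V k' j) (A (Tob V k' j) k' \<cdot> eR V \<tau> j k')"
    unfolding eR_mor[OF a T M j(1,3)] by (rule eR_cot[OF a U j(1,3)])
  have "A (Tob V k j) (Tob V k' j) \<cdot> rfun V T \<tau> j k k' =
      indmap V U j k k' (Tob V k j) (A (Tob V k j) k \<cdot> eR V \<tau> j k) (Tob V k' j) (A (Tob V k' j) k' \<cdot> eR V \<tau> j k') \<cdot> A k k'"
    unfolding rfun_def
    by (rule indmap_nat[OF T'(1) U'(1) F eR_cot[OF a T j(1,3)] cotU _ _ eR_typ[OF a T j(1,2)]]) (use T' J j in auto)
  then show ?thesis unfolding rfun_def eR_mor[OF a T M j(1,2)] eR_mor[OF a T M j(1,3)] .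
qed

lemma kron_nat: assumes a: "arity_system V Jo" and T: "Jtheory V Jo T \<tau>" and U: "Jtheory V Jo U \<upsilon>"
  and M: "theory_mor V Jo T \<tau> U \<upsilon> A" and j: "j \<in> Jo" "j' \<in> Jo" "k \<in> Jo" "k' \<in> Jo"
  shows "A (Tob V j k) (Tob V j' k') \<cdot> kron V T \<tau> j j' k k' = kron V U \<upsilon> j j' k k' \<cdot> (A j j' \<odot> A k k')"
proof -
  define a where "a = Tob V j k"
  define b where "b = Tob V j' k"
  define c where "c = Tob V j' k'"
  have J: "a \<in> Jo" "b \<in> Jo" "c \<in> Jo" using a j unfolding arity_system_def a_def b_def c_def by auto
  have T': "is_vcat V T" "VOb T = Jo" using jth[OF T] by auto
  have U': "is_vcat V U" "VOb U = Jo" using jth[OF U] by auto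
  have F: "vfun V T U A" using M unfolding theory_mor_def by blast
  have ob: "a \<in> VOb T" "b \<in> VOb T" "c \<in> VOb T" using J T' by auto
  let ?r = "rfun V T \<tau> k j j'" and ?l = "lfun V T \<tau> j' k k'"
  let ?rU = "rfun V U \<upsilon> k j j'" and ?lU = "lfun V U \<upsilon> j' k k'"
  have r: "?r \<in> Ar V" "Dom V ?r = VHom T j j'" "Cod V ?r = VHom T a b"
    using rfun_typ[OF a T j(3,1,2)] unfolding a_def b_def by auto
  have l: "?l \<in> Ar V" "Dom V ?l = VHom T k k'" "Cod V ?l = VHom T b c"
    using lfun_typ[OF a T j(2,3,4)] unfolding c_def b_def by auto
  have rU: "?rU \<in> Ar V" "Dom V ?rU = VHom U j j'" "Cod V ?rU = VHom U a b"
    using rfun_typ[OF a U j(3,1,2)] unfolding a_def b_def by auto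
  have lU: "?lU \<in> Ar V" "Dom V ?lU = VHom U k k'" "Cod V ?lU = VHom U b c"
    using lfun_typ[OF a U j(2,3,4)] unfolding c_def b_def by auto
  have rn: "A a b \<cdot> ?r = ?rU \<cdot> A j j'" using rfun_nat[OF a T U M j(3,1,2)] unfolding a_def b_def .
  have ln: "A b c \<cdot> ?l = ?lU \<cdot> A k k'" using lfun_nat[OF a T U M j(2,3,4)] unfolding c_def b_def .
  note simps = T' U' F J j r l rU lU
  have "A a c \<cdot> kron V T \<tau> j j' k k' = (A a c \<cdot> VComp T a b c) \<cdot> (Sy V (VHom T a b) (VHom T b c) \<cdot> (?r \<odot> ?l))"
    unfolding kron_def a_def[symmetric] b_def[symmetric] c_def[symmetric] using simps by simp
  also have "\<dots> = VComp U a b c \<cdot> (((A b c \<odot> A a b) \<cdot> Sy V (VHom T a b) (VHom T b c)) \<cdot> (?r \<odot> ?l))"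
    unfolding vfun_comp[OF F ob] using simps by simp
  also have "(A b c \<odot> A a b) \<cdot> Sy V (VHom T a b) (VHom T b c) = Sy V (VHom U a b) (VHom U b c) \<cdot> (A a b \<odot> A b c)"
    using sy_nat[of "A a b" "A b c"] simps by simp
  also have "(Sy V (VHom U a b) (VHom U b c) \<cdot> (A a b \<odot> A b c)) \<cdot> (?r \<odot> ?l) = Sy V (VHom U a b) (VHom U b c) \<cdot> ((A a b \<cdot> ?r) \<odot> (A b c \<cdot> ?l))"
    using simps by (simp add: interchange)
  also have "(A a b \<cdot> ?r) \<odot> (A b c \<cdot> ?l) = (?rU \<odot> ?lU) \<cdot> (A j j' \<odot> A k k')"
    unfolding rn ln using simps by (simp add: interchange)
  also have "VComp U a b c \<cdot> (Sy V (VHom U a b) (VHom U b c) \<cdot> ((?rU \<odot> ?lU) \<cdot> (A j j' \<odot> A k k'))) = kron V U \<upsilon> j j' k k' \<cdot> (A j j' \<odot> A k k')"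
    unfolding kron_def a_def[symmetric] b_def[symmetric] c_def[symmetric] using simps by simp
  finally show ?thesis unfolding a_def c_def .
qed

lemma kron'_nat: assumes a: "arity_system V Jo" and T: "Jtheory V Jo T \<tau>" and U: "Jtheory V Jo U \<upsilon>"
  and M: "theory_mor V Jo T \<tau> U \<upsilon> A" and j: "j \<in> Jo" "j' \<in> Jo" "k \<in> Jo" "k' \<in> Jo"
  shows "A (Tob V j k) (Tob V j' k') \<cdot> kron' V T \<tau> j j' k k' = kron' V U \<upsilon> j j' k k' \<cdot> (A j j' \<odot> A k k')"
proof -
  define a where "a = Tob V j k"
  define b where "b = Tob V j k'"
  define c where "c = Tob V j' k'"
  have J: "a \<in> Jo" "b \<in> Jo" "c \<in> Jo" using a j unfolding arity_system_def a_def b_def c_def by auto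
  have T': "is_vcat V T" "VOb T = Jo" using jth[OF T] by auto
  have U': "is_vcat V U" "VOb U = Jo" using jth[OF U] by auto
  have F: "vfun V T U A" using M unfolding theory_mor_def by blast
  have ob: "a \<in> VOb T" "b \<in> VOb T" "c \<in> VOb T" using J T' by auto
  let ?r = "rfun V T \<tau> k' j j'" and ?l = "lfun V T \<tau> j k k'"
  let ?rU = "rfun V U \<upsilon> k' j j'" and ?lU = "lfun V U \<upsilon> j k k'"
  have r: "?r \<in> Ar V" "Dom V ?r = VHom T j j'" "Cod V ?r = VHom T b c"
    using rfun_typ[OF a T j(4,1,2)] unfolding c_def b_def by auto
  have l: "?l \<in> Ar V" "Dom V ?l = VHom T k k'" "Cod V ?l = VHom T a b"
    using lfun_typ[OF a T j(1,3,4)] unfolding a_def b_def by auto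
  have rU: "?rU \<in> Ar V" "Dom V ?rU = VHom U j j'" "Cod V ?rU = VHom U b c"
    using rfun_typ[OF a U j(4,1,2)] unfolding c_def b_def by auto
  have lU: "?lU \<in> Ar V" "Dom V ?lU = VHom U k k'" "Cod V ?lU = VHom U a b"
    using lfun_typ[OF a U j(1,3,4)] unfolding a_def b_def by auto
  have rn: "A b c \<cdot> ?r = ?rU \<cdot> A j j'" using rfun_nat[OF a T U M j(4,1,2)] unfolding c_def b_def .
  have ln: "A a b \<cdot> ?l = ?lU \<cdot> A k k'" using lfun_nat[OF a T U M j(1,3,4)] unfolding a_def b_def .
  note simps = T' U' F J j r l rU lU
  have "A a c \<cdot> kron' V T \<tau> j j' k k' = (A a c \<cdot> VComp T a b c) \<cdot> (?r \<odot> ?l)"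
    unfolding kron'_def a_def[symmetric] b_def[symmetric] c_def[symmetric] using simps by simp
  also have "\<dots> = VComp U a b c \<cdot> ((A b c \<odot> A a b) \<cdot> (?r \<odot> ?l))"
    unfolding vfun_comp[OF F ob] using simps by simp
  also have "(A b c \<odot> A a b) \<cdot> (?r \<odot> ?l) = (A b c \<cdot> ?r) \<odot> (A a b \<cdot> ?l)"
    using simps by (simp add: interchange)
  also have "\<dots> = (?rU \<odot> ?lU) \<cdot> (A j j' \<odot> A k k')"
    unfolding rn ln using simps by (simp add: interchange)
  also have "VComp U a b c \<cdot> ((?rU \<odot> ?lU) \<cdot> (A j j' \<odot> A k k')) = kron' V U \<upsilon> j j' k k' \<cdot> (A j j' \<odot> A k k')"
    unfolding kron'_def a_def[symmetric] b_def[symmetric] c_def[symmetric] using simps by simp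
  finally show ?thesis unfolding a_def c_def .
qed

lemma kron_typ: assumes a: "arity_system V Jo" and T: "Jtheory V Jo T \<tau>" and j: "j \<in> Jo" "j' \<in> Jo" "k \<in> Jo" "k' \<in> Jo"
  shows "kron V T \<tau> j j' k k' \<in> Ar V \<and> Dom V (kron V T \<tau> j j' k k') = Tob V (VHom T j j') (VHom T k k') \<and>
    Cod V (kron V T \<tau> j j' k k') = VHom T (Tob V j k) (Tob V j' k')"
proof -
  have J: "Tob V j k \<in> Jo" "Tob V j' k \<in> Jo" "Tob V j' k' \<in> Jo" using a j unfolding arity_system_def by auto
  have T': "is_vcat V T" "VOb T = Jo" using jth[OF T] by auto
  show ?thesis unfolding kron_def using rfun_typ[OF a T j(3,1,2)] lfun_typ[OF a T j(2,3,4)] J T' j by simp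
qed

lemma kron'_typ: assumes a: "arity_system V Jo" and T: "Jtheory V Jo T \<tau>" and j: "j \<in> Jo" "j' \<in> Jo" "k \<in> Jo" "k' \<in> Jo"
  shows "kron' V T \<tau> j j' k k' \<in> Ar V \<and> Dom V (kron' V T \<tau> j j' k k') = Tob V (VHom T j j') (VHom T k k') \<and>
    Cod V (kron' V T \<tau> j j' k k') = VHom T (Tob V j k) (Tob V j' k')"
proof -
  have J: "Tob V j k \<in> Jo" "Tob V j k' \<in> Jo" "Tob V j' k' \<in> Jo" using a j unfolding arity_system_def by auto
  have T': "is_vcat V T" "VOb T = Jo" using jth[OF T] by auto
  show ?thesis unfolding kron'_def using rfun_typ[OF a T j(4,1,2)] lfun_typ[OF a T j(1,3,4)] J T' j by simp
qed

lemma key: assumes a: "arity_system V Jo" and T: "Jtheory V Jo T \<tau>" and U: "Jtheory V Jo U \<upsilon>"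
  and M: "theory_mor V Jo T \<tau> U \<upsilon> A" and PP: "Jtheory V Jo PP \<pi>" and QQ: "Jtheory V Jo QQ \<kappa>"
  and MP: "theory_mor V Jo PP \<pi> T \<tau> P" and MQ: "theory_mor V Jo QQ \<kappa> T \<tau> Q"
  and j: "j \<in> Jo" "j' \<in> Jo" "k \<in> Jo" "k' \<in> Jo"
  shows "kron V U \<upsilon> j j' k k' \<cdot> ((A j j' \<cdot> P j j') \<odot> (A k k' \<cdot> Q k k')) = A (Tob V j k) (Tob V j' k') \<cdot> (kron V T \<tau> j j' k k' \<cdot> (P j j' \<odot> Q k k'))"
    "kron' V U \<upsilon> j j' k k' \<cdot> ((A j j' \<cdot> P j j') \<odot> (A k k' \<cdot> Q k k')) = A (Tob V j k) (Tob V j' k') \<cdot> (kron' V T \<tau> j j' k k' \<cdot> (P j j' \<odot> Q k k'))"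
    "kron V T \<tau> j j' k k' \<cdot> (P j j' \<odot> Q k k') \<in> Ar V"
    "kron' V T \<tau> j j' k k' \<cdot> (P j j' \<odot> Q k k') \<in> Ar V"
    "Dom V (kron V T \<tau> j j' k k' \<cdot> (P j j' \<odot> Q k k')) = Dom V (kron' V T \<tau> j j' k k' \<cdot> (P j j' \<odot> Q k k'))"
    "Cod V (kron V T \<tau> j j' k k' \<cdot> (P j j' \<odot> Q k k')) = Dom V (A (Tob V j k) (Tob V j' k'))"
    "Cod V (kron' V T \<tau> j j' k k' \<cdot> (P j j' \<odot> Q k k')) = Dom V (A (Tob V j k) (Tob V j' k'))"
proof -
  have J: "Tob V j k \<in> Jo" "Tob V j' k' \<in> Jo" using a j unfolding arity_system_def by auto
  have T': "is_vcat V T" "VOb T = Jo" using jth[OF T] by auto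
  have U': "is_vcat V U" "VOb U = Jo" using jth[OF U] by auto
  have P': "VOb PP = Jo" using jth[OF PP] by auto
  have Q': "VOb QQ = Jo" using jth[OF QQ] by auto
  have F: "vfun V T U A" using M unfolding theory_mor_def by blast
  have FP: "vfun V PP T P" using MP unfolding theory_mor_def by blast
  have FQ: "vfun V QQ T Q" using MQ unfolding theory_mor_def by blast
  have kt: "kron V T \<tau> j j' k k' \<in> Ar V" "Dom V (kron V T \<tau> j j' k k') = Tob V (VHom T j j') (VHom T k k')"
    "Cod V (kron V T \<tau> j j' k k') = VHom T (Tob V j k) (Tob V j' k')" using kron_typ[OF a T j] by auto
  have kt': "kron' V T \<tau> j j' k k' \<in> Ar V" "Dom V (kron' V T \<tau> j j' k k') = Tob V (VHom T j j') (VHom T k k')"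
    "Cod V (kron' V T \<tau> j j' k k') = VHom T (Tob V j k) (Tob V j' k')" using kron'_typ[OF a T j] by auto
  have ku: "kron V U \<upsilon> j j' k k' \<in> Ar V" "Dom V (kron V U \<upsilon> j j' k k') = Tob V (VHom U j j') (VHom U k k')"
    "Cod V (kron V U \<upsilon> j j' k k') = VHom U (Tob V j k) (Tob V j' k')" using kron_typ[OF a U j] by auto
  have ku': "kron' V U \<upsilon> j j' k k' \<in> Ar V" "Dom V (kron' V U \<upsilon> j j' k k') = Tob V (VHom U j j') (VHom U k k')"
    "Cod V (kron' V U \<upsilon> j j' k k') = VHom U (Tob V j k) (Tob V j' k')" using kron'_typ[OF a U j] by auto
  have obP: "j \<in> VOb PP" "j' \<in> VOb PP" using P' j by auto
  have obQ: "k \<in> VOb QQ" "k' \<in> VOb QQ" using Q' j by auto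
  have obT: "j \<in> VOb T" "j' \<in> VOb T" "k \<in> VOb T" "k' \<in> VOb T" "Tob V j k \<in> VOb T" "Tob V j' k' \<in> VOb T" using T' j J by auto
  note simps = kt kt' ku ku' vfun_ar[OF FP obP] vfun_dom[OF FP obP] vfun_cod[OF FP obP]
     vfun_ar[OF FQ obQ] vfun_dom[OF FQ obQ] vfun_cod[OF FQ obQ] F obT
  have ip: "(A j j' \<cdot> P j j') \<odot> (A k k' \<cdot> Q k k') = (A j j' \<odot> A k k') \<cdot> (P j j' \<odot> Q k k')"
    using simps by (simp add: interchange)
  have "kron V U \<upsilon> j j' k k' \<cdot> ((A j j' \<odot> A k k') \<cdot> (P j j' \<odot> Q k k')) = (kron V U \<upsilon> j j' k k' \<cdot> (A j j' \<odot> A k k')) \<cdot> (P j j' \<odot> Q k k')"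
    using simps by simp
  also have "\<dots> = (A (Tob V j k) (Tob V j' k') \<cdot> kron V T \<tau> j j' k k') \<cdot> (P j j' \<odot> Q k k')"
    unfolding kron_nat[OF a T U M j] ..
  also have "\<dots> = A (Tob V j k) (Tob V j' k') \<cdot> (kron V T \<tau> j j' k k' \<cdot> (P j j' \<odot> Q k k'))"
    using simps by simp
  finally show "kron V U \<upsilon> j j' k k' \<cdot> ((A j j' \<cdot> P j j') \<odot> (A k k' \<cdot> Q k k')) = A (Tob V j k) (Tob V j' k') \<cdot> (kron V T \<tau> j j' k k' \<cdot> (P j j' \<odot> Q k k'))"
    unfolding ip .
  have "kron' V U \<upsilon> j j' k k' \<cdot> ((A j j' \<odot> A k k') \<cdot> (P j j' \<odot> Q k k')) = (kron' V U \<upsilon> j j' k k' \<cdot> (A j j' \<odot> A k k')) \<cdot> (P j j' \<odot> Q k k')"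
    using simps by simp
  also have "\<dots> = (A (Tob V j k) (Tob V j' k') \<cdot> kron' V T \<tau> j j' k k') \<cdot> (P j j' \<odot> Q k k')"
    unfolding kron'_nat[OF a T U M j] ..
  also have "\<dots> = A (Tob V j k) (Tob V j' k') \<cdot> (kron' V T \<tau> j j' k k' \<cdot> (P j j' \<odot> Q k k'))"
    using simps by simp
  finally show "kron' V U \<upsilon> j j' k k' \<cdot> ((A j j' \<cdot> P j j') \<odot> (A k k' \<cdot> Q k k')) = A (Tob V j k) (Tob V j' k') \<cdot> (kron' V T \<tau> j j' k k' \<cdot> (P j j' \<odot> Q k k'))"
    unfolding ip .
  show "kron V T \<tau> j j' k k' \<cdot> (P j j' \<odot> Q k k') \<in> Ar V"
    "kron' V T \<tau> j j' k k' \<cdot> (P j j' \<odot> Q k k') \<in> Ar V"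
    "Dom V (kron V T \<tau> j j' k k' \<cdot> (P j j' \<odot> Q k k')) = Dom V (kron' V T \<tau> j j' k k' \<cdot> (P j j' \<odot> Q k k'))"
    "Cod V (kron V T \<tau> j j' k k' \<cdot> (P j j' \<odot> Q k k')) = Dom V (A (Tob V j k) (Tob V j' k'))"
    "Cod V (kron' V T \<tau> j j' k k' \<cdot> (P j j' \<odot> Q k k')) = Dom V (A (Tob V j k) (Tob V j' k'))"
    using simps by simp_all
qed

end

theorem proposition5p15:
  fixes V :: "('o,'m) vbase" and Jo :: "'o set"
    and PP QQ T U :: "('o,'m) vcat"
    and \<pi> \<kappa> \<tau> \<upsilon> P Q A :: "'o \<Rightarrow> 'o \<Rightarrow> 'm"
  assumes "smcc V" and "arity_system V Jo"
    and "Jtheory V Jo PP \<pi>" and "Jtheory V Jo QQ \<kappa>"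
    and "Jtheory V Jo T \<tau>" and "Jtheory V Jo U \<upsilon>"
    and "theory_mor V Jo PP \<pi> T \<tau> P"
    and "theory_mor V Jo QQ \<kappa> T \<tau> Q"
    and "theory_mor V Jo T \<tau> U \<upsilon> A"
  shows "(commutes V Jo T \<tau> P Q \<longrightarrow>
            commutes V Jo U \<upsilon> (\<lambda>a b. Cmp V (A a b) (P a b)) (\<lambda>a b. Cmp V (A a b) (Q a b)))
       \<and> ((\<forall>a\<in>Jo. \<forall>b\<in>Jo. mono_in V (A a b)) \<and>
            commutes V Jo U \<upsilon> (\<lambda>a b. Cmp V (A a b) (P a b)) (\<lambda>a b. Cmp V (A a b) (Q a b)) \<longrightarrow>
            commutes V Jo T \<tau> P Q)"
proof -
  interpret smc V by unfold_locales (rule assms(1))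
  note K = key[OF assms(2,5,6,9,3,4,7,8)]
  show ?thesis
  proof (intro conjI impI)
    assume "commutes V Jo T \<tau> P Q"
    then show "commutes V Jo U \<upsilon> (\<lambda>a b. Cmp V (A a b) (P a b)) (\<lambda>a b. Cmp V (A a b) (Q a b))"
      unfolding commutes_def using K(1,2) by simp
  next
    assume h: "(\<forall>a\<in>Jo. \<forall>b\<in>Jo. mono_in V (A a b)) \<and>
            commutes V Jo U \<upsilon> (\<lambda>a b. Cmp V (A a b) (P a b)) (\<lambda>a b. Cmp V (A a b) (Q a b))"
    show "commutes V Jo T \<tau> P Q"
      unfolding commutes_def
    proof (intro ballI)
      fix j j' k k' assume j: "j \<in> Jo" "j' \<in> Jo" "k \<in> Jo" "k' \<in> Jo"
      have J: "Tob V j k \<in> Jo" "Tob V j' k' \<in> Jo" using assms(2) j unfolding arity_system_def by auto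
      have m: "mono_in V (A (Tob V j k) (Tob V j' k'))" using h J by blast
      have eq: "A (Tob V j k) (Tob V j' k') \<cdot> (kron V T \<tau> j j' k k' \<cdot> (P j j' \<odot> Q k k')) =
          A (Tob V j k) (Tob V j' k') \<cdot> (kron' V T \<tau> j j' k k' \<cdot> (P j j' \<odot> Q k k'))"
        using h j unfolding commutes_def K(1)[OF j, symmetric] K(2)[OF j, symmetric] by simp
      show "kron V T \<tau> j j' k k' \<cdot> (P j j' \<odot> Q k k') = kron' V T \<tau> j j' k k' \<cdot> (P j j' \<odot> Q k k')"
        using m eq K(3-7)[OF j] unfolding mono_in_def by metis
    qed
  qed
qed


end
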